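(* Let $q$ be a power of an odd prime with $q\equiv3\pmod4$, $d=4k+2$ with $k$ a positive integer, and $A\subset\mathbb F_q^d$. Let $N(A)$ be the number of pairs $(a,b)\in A^2$ with $\|a-b\|=0$. Then \[N(A)\ll\frac{|A|^2}{q}+q^{\frac{d-2}{2}}|A|.\]
   Context: $\|x\|=x_1^2+\cdots+x_d^2$. $X\ll Y$ means $X\le CY$ with $C$ absolute (independent of $q$ and $A$). *)

theory Defs
  imports "HOL-Algebra.Ring" "HOL-Algebra.Ring_Divisibility" "HOL-Library.FuncSet" "HOL-Computational_Algebra.Primes"
begin

definition sqnorm :: "('a, 'b) ring_scheme \<Rightarrow> nat \<Rightarrow> (nat \<Rightarrow> 'a) \<Rightarrow> 'a" where
  "sqnorm R d x = finsum R (\<lambda>i. x i \<otimes>\<^bsub>R\<^esub> x i) {..<d}"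

definition null_pairs :: "('a, 'b) ring_scheme \<Rightarrow> nat \<Rightarrow> (nat \<Rightarrow> 'a) set \<Rightarrow> nat" where
  "null_pairs R d A = card {(a, b). a \<in> A \<and> b \<in> A \<and>
      sqnorm R d (\<lambda>i. a i \<ominus>\<^bsub>R\<^esub> b i) = \<zero>\<^bsub>R\<^esub>}"

end

theory Submission
  imports Defs "HOL-Algebra.Multiplicative_Group"
begin


locale fq = field R for R (structure) +
  assumes fin: "finite (carrier R)" and q3: "card (carrier R) mod 4 = 3"
begin

abbreviation "F \<equiv> carrier R"
abbreviation "q \<equiv> card (carrier R)"

lemma two_nz: "\<one> \<oplus> \<one> \<noteq> \<zero>"
proof
  assume h: "\<one> \<oplus> \<one> = \<zero>"
  have "q = 2*(q div 2)+1" using q3 by presburger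
  then obtain m where qm: "q = 2*m+1" by blast
  have o: "order (add_monoid R) = q" by (simp add: order_def)
  have "add_pow R q \<one> = \<zero>" using add.pow_order_eq_1[of \<one>] o by simp
  moreover have "add_pow R (2*m) \<one> = \<zero>"
  proof -
    have "add_pow R (2::nat) \<one> = \<one> \<oplus> \<one>"
      by (simp add: numeral_2_eq_2)
    hence "add_pow R (2::nat) \<one> = \<zero>" using h by simp
    moreover have "add_pow R (2*m) \<one> = add_pow R m (add_pow R (2::nat) \<one>)"
      by (metis add.nat_pow_pow one_closed mult.commute)
    ultimately show ?thesis by simp
  qed
  moreover have "add_pow R (Suc (2*m)) \<one> = add_pow R (2*m) \<one> \<oplus> \<one>"
    by (rule add.nat_pow_Suc)
  ultimately have "\<zero> = \<zero> \<oplus> \<one>" using qm by simp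
  thus False by simp
qed

lemma neg1_nsq: assumes x: "x \<in> F" shows "x \<otimes> x \<noteq> \<ominus> \<one>"
proof
  assume h: "x \<otimes> x = \<ominus> \<one>"
  have x0: "x \<noteq> \<zero>"
  proof
    assume "x = \<zero>"
    hence "\<ominus> \<one> = \<zero>" using h by simp
    hence "\<one> = \<zero>" by (metis minus_minus minus_zero one_closed)
    thus False by simp
  qed
  have "q - 1 = 4*(q div 4)+2" using q3 by presburger
  then obtain m where qm: "q - 1 = 4*m+2" by blast
  have G: "group (units_of R)" by (rule units_group)
  have xu: "x \<in> Units R" using x x0 field_Units by blast
  have "order (units_of R) = q - 1"
    unfolding order_def units_of_carrier field_Units using fin by (simp add: card.remove)
  hence "x [^] (q - 1) = \<one>"
    using group.pow_order_eq_1[OF G, of x] xu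
    by (simp add: units_of_pow units_of_carrier units_of_one)
  moreover have "x [^] (2::nat) = \<ominus> \<one>" using h x by (simp add: numeral_2_eq_2)
  moreover have "(\<ominus> \<one>) [^] (2::nat) = \<one>" by (simp add: numeral_2_eq_2 l_minus r_minus)
  moreover have "x [^] (4*m+2) = ((x [^] (2::nat)) [^] (2::nat)) [^] m \<otimes> x [^] (2::nat)"
  proof -
    have "x [^] (4*m+2) = x [^] (4*m) \<otimes> x [^] (2::nat)" using x by (simp add: nat_pow_mult)
    moreover have "x [^] (4*m) = ((x [^] (2::nat)) [^] (2::nat)) [^] m" using x by (simp add: nat_pow_pow)
    ultimately show ?thesis by simp
  qed
  ultimately have "\<one> = \<ominus> \<one>" using qm by simp
  hence "\<one> \<oplus> \<one> = \<zero>" by (metis one_closed r_neg)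
  thus False using two_nz by simp
qed


lemma sq_sum0: assumes x: "x \<in> F" and y: "y \<in> F" and h: "x \<otimes> x \<oplus> y \<otimes> y = \<zero>"
  shows "x = \<zero> \<and> y = \<zero>"
proof (cases "y = \<zero>")
  case True
  with h x have "x \<otimes> x = \<zero>" by simp
  with x have "x = \<zero>" using integral by blast
  with True show ?thesis by simp
next
  case False
  have iy: "inv y \<in> F" "y \<otimes> inv y = \<one>" using False y by (auto simp: field_Units)
  have xx: "x \<otimes> x = \<ominus> (y \<otimes> y)" using minus_equality[of "x \<otimes> x" "y \<otimes> y"] h x y by simp
  have e1: "(y \<otimes> y) \<otimes> (inv y \<otimes> inv y) = (y \<otimes> inv y) \<otimes> (y \<otimes> inv y)" using y iy(1) by algebra
  have "(x \<otimes> inv y) \<otimes> (x \<otimes> inv y) = (x \<otimes> x) \<otimes> (inv y \<otimes> inv y)"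
    using x iy by algebra
  also have "\<dots> = \<ominus> ((y \<otimes> y) \<otimes> (inv y \<otimes> inv y))" using x y iy by (simp add: xx l_minus)
  also have "\<dots> = \<ominus> \<one>" using e1 iy by simp
  finally show ?thesis using neg1_nsq[of "x \<otimes> inv y"] x iy by simp
qed

lemma sq_eq: assumes x: "x \<in> F" and y: "y \<in> F" and h: "x \<otimes> x = y \<otimes> y"
  shows "x = y \<or> x = \<ominus> y"
proof -
  have "(x \<ominus> y) \<otimes> (x \<oplus> y) = x \<otimes> x \<ominus> y \<otimes> y" using x y by algebra
  also have "\<dots> = \<zero>" using h y by simp
  finally have "x \<ominus> y = \<zero> \<or> x \<oplus> y = \<zero>" using x y integral by blast
  thus ?thesis using x y r_right_minus_eq minus_equality[of x y] by blast
qed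


lemma q_gt1: "q > 1"
proof -
  have "{\<zero>, \<one>} \<subseteq> F" by simp
  hence "card {\<zero>, \<one>} \<le> q" using fin card_mono by blast
  thus ?thesis by simp
qed

lemma sq_fiber_le2: "card {x\<in>F. x \<otimes> x = s} \<le> 2"
proof (cases "{x\<in>F. x \<otimes> x = s} = {}")
  case True show ?thesis by (subst True) simp
next
  case False
  then obtain x0 where x0: "x0 \<in> F" "x0 \<otimes> x0 = s" by blast
  have "{x\<in>F. x \<otimes> x = s} \<subseteq> {x0, \<ominus> x0}" using sq_eq x0 by auto
  hence "card {x\<in>F. x \<otimes> x = s} \<le> card {x0, \<ominus> x0}" by (simp add: card_mono)
  also have "\<dots> \<le> 2" by (cases "x0 = \<ominus> x0") auto
  finally show ?thesis .
qed

lemma sq_fiber0: "{x\<in>F. x \<otimes> x = \<zero>} = {\<zero>}"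
  using integral by auto

lemma two_sq: assumes g: "g \<in> F" shows "\<exists>x\<in>F. \<exists>y\<in>F. x \<otimes> x \<oplus> y \<otimes> y = g"
proof -
  define SQ where "SQ = (\<lambda>x. x \<otimes> x) ` F"
  have fSQ: "finite SQ" "SQ \<subseteq> F" using fin by (auto simp: SQ_def)
  have z: "\<zero> \<in> SQ" unfolding SQ_def by (rule image_eqI[where x="\<zero>"]) simp_all
  have "q = (\<Sum>s\<in>SQ. card {x\<in>F. x \<otimes> x = s})"
    using sum.group[of F SQ "\<lambda>x. x \<otimes> x" "\<lambda>_. 1::nat"] fin fSQ by (simp add: SQ_def)
  also have "\<dots> = card {x\<in>F. x \<otimes> x = \<zero>} + (\<Sum>s\<in>SQ-{\<zero>}. card {x\<in>F. x \<otimes> x = s})"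
    using z fSQ by (simp add: sum.remove)
  also have "\<dots> \<le> 1 + (\<Sum>s\<in>SQ-{\<zero>}. 2)"
    using sq_fiber0 sq_fiber_le2 by (intro add_mono sum_mono) auto
  also have "\<dots> = 1 + 2 * (card SQ - 1)" using z fSQ by simp
  finally have c0: "q \<le> 1 + 2 * (card SQ - 1)" .
  have "card SQ \<ge> 1" using z fSQ by (metis One_nat_def Suc_leI card_gt_0_iff empty_iff)
  hence c1: "q + 1 \<le> 2 * card SQ" using c0 by arith
  define I where "I = (\<lambda>s. g \<ominus> s) ` SQ"
  have "inj_on (\<lambda>s. g \<ominus> s) SQ"
  proof (rule inj_on_inverseI)
    fix s assume "s \<in> SQ" hence "s \<in> F" using fSQ by auto
    thus "g \<ominus> (g \<ominus> s) = s" using g by algebra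
  qed
  hence cI: "card I = card SQ" by (simp add: I_def card_image)
  have IF: "I \<subseteq> F" using g fSQ by (auto simp: I_def)
  have "SQ \<inter> I \<noteq> {}"
  proof
    assume "SQ \<inter> I = {}"
    hence "card (SQ \<union> I) = 2 * card SQ" using cI fSQ by (simp add: I_def card_Un_disjoint)
    moreover have "card (SQ \<union> I) \<le> q" using IF fSQ fin by (simp add: card_mono)
    ultimately show False using c1 by simp
  qed
  then obtain x y where xy: "x \<in> F" "y \<in> F" "x \<otimes> x = g \<ominus> y \<otimes> y" unfolding I_def SQ_def by auto
  have "(g \<ominus> y \<otimes> y) \<oplus> y \<otimes> y = g" using g xy by algebra
  thus ?thesis using xy by metis
qed


end


context fq begin

definition r :: "'a \<Rightarrow> nat" where
  "r g = card {p \<in> F \<times> F. fst p \<otimes> fst p \<oplus> snd p \<otimes> snd p = g}"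

lemma r0: "r \<zero> = 1"
proof -
  have e: "(a \<otimes> a \<oplus> b \<otimes> b = \<zero>) = (a = \<zero> \<and> b = \<zero>)" if "a \<in> F" "b \<in> F" for a b
  proof
    assume "a \<otimes> a \<oplus> b \<otimes> b = \<zero>" thus "a = \<zero> \<and> b = \<zero>" using sq_sum0 that by blast
  qed simp
  have "{p \<in> F \<times> F. fst p \<otimes> fst p \<oplus> snd p \<otimes> snd p = \<zero>} = {(\<zero>, \<zero>)}"
    using e by auto
  thus ?thesis by (simp add: r_def)
qed

lemma cancel_inv: "a \<in> F \<Longrightarrow> g \<in> F \<Longrightarrow> g \<noteq> \<zero> \<Longrightarrow> a \<otimes> g \<otimes> inv g = a"
  by (simp add: m_assoc field_Units)

lemma r_eq1: assumes g: "g \<in> F" "g \<noteq> \<zero>" shows "r g = r \<one>"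
proof -
  obtain u v where uv: "u \<in> F" "v \<in> F" and uvg: "u \<otimes> u \<oplus> v \<otimes> v = g" using two_sq g by blast
  have ig: "inv g \<in> F" using g by (auto simp: field_Units)
  define A1 where "A1 = {p \<in> F \<times> F. fst p \<otimes> fst p \<oplus> snd p \<otimes> snd p = \<one>}"
  define Ag where "Ag = {p \<in> F \<times> F. fst p \<otimes> fst p \<oplus> snd p \<otimes> snd p = g}"
  define \<phi> where "\<phi> = (\<lambda>p. (fst p \<otimes> u \<ominus> snd p \<otimes> v, fst p \<otimes> v \<oplus> snd p \<otimes> u))"
  define \<psi> where "\<psi> = (\<lambda>p. ((fst p \<otimes> u \<oplus> snd p \<otimes> v) \<otimes> inv g, (snd p \<otimes> u \<ominus> fst p \<otimes> v) \<otimes> inv g))"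
  have "bij_betw \<phi> A1 Ag"
  proof (rule bij_betw_byWitness[where f'=\<psi>])
    show "\<forall>a\<in>A1. \<psi> (\<phi> a) = a"
    proof
      fix a assume "a \<in> A1"
      then obtain x y where a: "a = (x, y)" and xy: "x \<in> F" "y \<in> F" by (auto simp: A1_def)
      have "(x \<otimes> u \<ominus> y \<otimes> v) \<otimes> u \<oplus> (x \<otimes> v \<oplus> y \<otimes> u) \<otimes> v = x \<otimes> (u \<otimes> u \<oplus> v \<otimes> v)"
        using xy uv by algebra
      hence e1: "((x \<otimes> u \<ominus> y \<otimes> v) \<otimes> u \<oplus> (x \<otimes> v \<oplus> y \<otimes> u) \<otimes> v) \<otimes> inv g = x"
        unfolding uvg using cancel_inv xy g by simp
      have "(x \<otimes> v \<oplus> y \<otimes> u) \<otimes> u \<ominus> (x \<otimes> u \<ominus> y \<otimes> v) \<otimes> v = y \<otimes> (u \<otimes> u \<oplus> v \<otimes> v)"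
        using xy uv by algebra
      hence e2: "((x \<otimes> v \<oplus> y \<otimes> u) \<otimes> u \<ominus> (x \<otimes> u \<ominus> y \<otimes> v) \<otimes> v) \<otimes> inv g = y"
        unfolding uvg using cancel_inv xy g by simp
      show "\<psi> (\<phi> a) = a" using e1 e2 a by (simp add: \<phi>_def \<psi>_def)
    qed
    show "\<forall>a\<in>Ag. \<phi> (\<psi> a) = a"
    proof
      fix a assume "a \<in> Ag"
      then obtain x y where a: "a = (x, y)" and xy: "x \<in> F" "y \<in> F" by (auto simp: Ag_def)
      have "((x \<otimes> u \<oplus> y \<otimes> v) \<otimes> inv g) \<otimes> u \<ominus> ((y \<otimes> u \<ominus> x \<otimes> v) \<otimes> inv g) \<otimes> v
            = x \<otimes> (u \<otimes> u \<oplus> v \<otimes> v) \<otimes> inv g" using xy uv ig by algebra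
      hence e1: "((x \<otimes> u \<oplus> y \<otimes> v) \<otimes> inv g) \<otimes> u \<ominus> ((y \<otimes> u \<ominus> x \<otimes> v) \<otimes> inv g) \<otimes> v = x"
        unfolding uvg using cancel_inv xy g by simp
      have "((x \<otimes> u \<oplus> y \<otimes> v) \<otimes> inv g) \<otimes> v \<oplus> ((y \<otimes> u \<ominus> x \<otimes> v) \<otimes> inv g) \<otimes> u
            = y \<otimes> (u \<otimes> u \<oplus> v \<otimes> v) \<otimes> inv g" using xy uv ig by algebra
      hence e2: "((x \<otimes> u \<oplus> y \<otimes> v) \<otimes> inv g) \<otimes> v \<oplus> ((y \<otimes> u \<ominus> x \<otimes> v) \<otimes> inv g) \<otimes> u = y"
        unfolding uvg using cancel_inv xy g by simp
      show "\<phi> (\<psi> a) = a" using e1 e2 a by (simp add: \<phi>_def \<psi>_def)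
    qed
    show "\<phi> ` A1 \<subseteq> Ag"
    proof
      fix b assume "b \<in> \<phi> ` A1"
      then obtain x y where b: "b = \<phi> (x, y)" and xy: "x \<in> F" "y \<in> F" and h: "x \<otimes> x \<oplus> y \<otimes> y = \<one>"
        by (auto simp: A1_def)
      have "(x \<otimes> u \<ominus> y \<otimes> v) \<otimes> (x \<otimes> u \<ominus> y \<otimes> v) \<oplus> (x \<otimes> v \<oplus> y \<otimes> u) \<otimes> (x \<otimes> v \<oplus> y \<otimes> u)
          = (x \<otimes> x \<oplus> y \<otimes> y) \<otimes> (u \<otimes> u \<oplus> v \<otimes> v)" using xy uv by algebra
      hence "(x \<otimes> u \<ominus> y \<otimes> v) \<otimes> (x \<otimes> u \<ominus> y \<otimes> v) \<oplus> (x \<otimes> v \<oplus> y \<otimes> u) \<otimes> (x \<otimes> v \<oplus> y \<otimes> u) = g"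
        unfolding h uvg using g by simp
      thus "b \<in> Ag" using b xy uv by (simp add: Ag_def \<phi>_def)
    qed
    show "\<psi> ` Ag \<subseteq> A1"
    proof
      fix b assume "b \<in> \<psi> ` Ag"
      then obtain x y where b: "b = \<psi> (x, y)" and xy: "x \<in> F" "y \<in> F" and h: "x \<otimes> x \<oplus> y \<otimes> y = g"
        by (auto simp: Ag_def)
      have "((x \<otimes> u \<oplus> y \<otimes> v) \<otimes> inv g) \<otimes> ((x \<otimes> u \<oplus> y \<otimes> v) \<otimes> inv g) \<oplus>
            ((y \<otimes> u \<ominus> x \<otimes> v) \<otimes> inv g) \<otimes> ((y \<otimes> u \<ominus> x \<otimes> v) \<otimes> inv g)
          = ((x \<otimes> x \<oplus> y \<otimes> y) \<otimes> inv g) \<otimes> ((u \<otimes> u \<oplus> v \<otimes> v) \<otimes> inv g)" using xy uv ig by algebra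
      also have "\<dots> = \<one>" unfolding h uvg using g by (simp add: field_Units)
      finally show "b \<in> A1" using b xy uv ig by (simp add: A1_def \<psi>_def)
    qed
  qed
  thus ?thesis unfolding r_def A1_def[symmetric] Ag_def[symmetric] by (simp add: bij_betw_same_card)
qed

lemma r_sum: "(\<Sum>g\<in>F. r g) = q * q"
proof -
  have "(\<Sum>g\<in>F. r g) = (\<Sum>g\<in>F. sum (\<lambda>_. 1::nat) {p. p \<in> F \<times> F \<and> fst p \<otimes> fst p \<oplus> snd p \<otimes> snd p = g})"
    by (simp add: r_def)
  also have "\<dots> = sum (\<lambda>_. 1::nat) (F \<times> F)"
    by (rule sum.group) (use fin in auto)
  finally show ?thesis by (simp add: card_cartesian_product)
qed

lemma r1: "r \<one> = q + 1"
proof -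
  have "(\<Sum>g\<in>F. r g) = r \<zero> + (\<Sum>g\<in>F - {\<zero>}. r g)" by (rule sum.remove[OF fin zero_closed])
  also have "(\<Sum>g\<in>F - {\<zero>}. r g) = (\<Sum>g\<in>F - {\<zero>}. r \<one>)"
    by (rule sum.cong) (auto intro: r_eq1)
  also have "r \<zero> + (\<Sum>g\<in>F - {\<zero>}. r \<one>) = 1 + (q - 1) * r \<one>" using r0 fin by (simp add: card_Diff_singleton)
  finally have "q * q = 1 + (q - 1) * r \<one>" using r_sum by simp
  hence "(q - 1) * (q + 1) = (q - 1) * r \<one>" using q_gt1
    by (cases q) (auto simp: algebra_simps)
  thus ?thesis using q_gt1 nat_mult_eq_cancel1[of "q - 1" "q + 1" "r \<one>"] by simp
qed

lemma r_val: "g \<in> F \<Longrightarrow> r g = (if g = \<zero> then 1 else q + 1)"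
  by (cases "g = \<zero>") (simp add: r0, simp add: r_eq1[of g] r1)

end


context fq begin

definition vecs :: "nat \<Rightarrow> (nat \<Rightarrow> 'a) set" where "vecs n = {..<n} \<rightarrow>\<^sub>E F"
definition bil :: "nat \<Rightarrow> (nat \<Rightarrow> 'a) \<Rightarrow> (nat \<Rightarrow> 'a) \<Rightarrow> 'a" where
  "bil n x y = finsum R (\<lambda>i. x i \<otimes> y i) {..<n}"
definition cnt :: "nat \<Rightarrow> 'a \<Rightarrow> real" where
  "cnt n e = real (card {x \<in> vecs n. bil n x x = e})"

lemma sqnorm_bil: "sqnorm R n x = bil n x x" by (simp add: sqnorm_def bil_def)

lemma vecs_fin: "finite (vecs n)" using fin by (simp add: vecs_def finite_PiE)
lemma vecs_card: "card (vecs n) = q ^ n" by (simp add: vecs_def card_PiE)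
lemma vecs_in: "x \<in> vecs n \<Longrightarrow> i < n \<Longrightarrow> x i \<in> F" by (auto simp: vecs_def)
lemma vecs_out: "x \<in> vecs n \<Longrightarrow> \<not> i < n \<Longrightarrow> x i = undefined" by (auto simp: vecs_def)

lemma bil_closed: "x \<in> vecs n \<Longrightarrow> y \<in> vecs n \<Longrightarrow> bil n x y \<in> F"
  unfolding bil_def by (rule finsum_closed) (auto simp: vecs_in)

lemma bil_comm: "x \<in> vecs n \<Longrightarrow> y \<in> vecs n \<Longrightarrow> bil n x y = bil n y x"
  unfolding bil_def by (rule finsum_cong) (auto simp: vecs_in m_comm)

lemma upd_vecs: "y \<in> vecs n \<Longrightarrow> t \<in> F \<Longrightarrow> y(n := t) \<in> vecs (Suc n)"
  unfolding vecs_def lessThan_Suc by (rule PiE_fun_upd) auto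

lemma bil_upd: assumes y: "y \<in> vecs n" and y': "y' \<in> vecs n" and t: "t \<in> F" and t': "t' \<in> F"
  shows "bil (Suc n) (y(n := t)) (y'(n := t')) = bil n y y' \<oplus> t \<otimes> t'"
proof -
  have "bil (Suc n) (y(n := t)) (y'(n := t')) = finsum R (\<lambda>i. (y(n := t)) i \<otimes> (y'(n := t')) i) (insert n {..<n})"
    by (simp add: bil_def lessThan_Suc)
  also have "\<dots> = t \<otimes> t' \<oplus> finsum R (\<lambda>i. (y(n := t)) i \<otimes> (y'(n := t')) i) {..<n}"
    using y y' t t' by (subst finsum_insert) (auto simp: vecs_in)
  also have "finsum R (\<lambda>i. (y(n := t)) i \<otimes> (y'(n := t')) i) {..<n} = bil n y y'"
    unfolding bil_def using y y' by (intro finsum_cong) (auto simp: vecs_in)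
  finally have h: "bil (Suc n) (y(n := t)) (y'(n := t')) = t \<otimes> t' \<oplus> bil n y y'" .
  show ?thesis by (subst h) (rule a_comm, use t t' in simp, rule bil_closed[OF y y'])
qed

lemma split_sum:
  fixes f :: "(nat \<Rightarrow> 'a) \<Rightarrow> 'c::comm_monoid_add"
  shows "sum f (vecs (Suc n)) = (\<Sum>t\<in>F. \<Sum>y\<in>vecs n. f (y(n := t)))"
proof -
  have bij: "bij_betw (\<lambda>p. (snd p)(n := fst p)) (F \<times> vecs n) (vecs (Suc n))"
  proof (rule bij_betw_byWitness[where f'="\<lambda>x. (x n, x(n := undefined))"])
    show "\<forall>a\<in>F \<times> vecs n. (\<lambda>x. (x n, x(n := undefined))) ((\<lambda>p. (snd p)(n := fst p)) a) = a"
    proof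
      fix a assume "a \<in> F \<times> vecs n"
      then obtain t y where a: "a = (t, y)" "y \<in> vecs n" by auto
      have "y(n := undefined) = y" using vecs_out[OF a(2), of n] by auto
      thus "(\<lambda>x. (x n, x(n := undefined))) ((\<lambda>p. (snd p)(n := fst p)) a) = a" using a by simp
    qed
    show "\<forall>a\<in>vecs (Suc n). (\<lambda>p. (snd p)(n := fst p)) ((\<lambda>x. (x n, x(n := undefined))) a) = a"
      by auto
    show "(\<lambda>p. (snd p)(n := fst p)) ` (F \<times> vecs n) \<subseteq> vecs (Suc n)" using upd_vecs by auto
    show "(\<lambda>x. (x n, x(n := undefined))) ` vecs (Suc n) \<subseteq> F \<times> vecs n"
    proof
      fix p assume "p \<in> (\<lambda>x. (x n, x(n := undefined))) ` vecs (Suc n)"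
      then obtain x where x: "x \<in> vecs (Suc n)" "p = (x n, x(n := undefined))" by auto
      have "x n \<in> F" using x vecs_in by auto
      moreover have "x(n := undefined) \<in> vecs n"
        using x unfolding vecs_def lessThan_Suc by (intro fun_upd_in_PiE) auto
      ultimately show "p \<in> F \<times> vecs n" using x by simp
    qed
  qed
  have "sum f (vecs (Suc n)) = sum (\<lambda>p. f ((snd p)(n := fst p))) (F \<times> vecs n)"
    using sum.reindex_bij_betw[OF bij, of f] by simp
  also have "\<dots> = (\<Sum>t\<in>F. \<Sum>y\<in>vecs n. f (y(n := t)))"
    by (simp add: sum.cartesian_product split_def)
  finally show ?thesis .
qed

lemma card_sum: "finite S \<Longrightarrow> real (card {x\<in>S. P x}) = (\<Sum>x\<in>S. if P x then 1 else 0)"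
proof -
  assume "finite S"
  hence "(\<Sum>x\<in>S. if P x then 1 else 0) = sum (\<lambda>_. 1::real) {x\<in>S. P x}" by (rule sum.inter_filter[symmetric])
  also have "\<dots> = real (card {x\<in>S. P x})" by simp
  finally show ?thesis by simp
qed

lemma r_sum2: "g \<in> F \<Longrightarrow> (\<Sum>s\<in>F. \<Sum>t\<in>F. if s \<otimes> s \<oplus> t \<otimes> t = g then 1 else 0) = real (r g)"
proof -
  assume g: "g \<in> F"
  have "real (r g) = (\<Sum>p\<in>F \<times> F. if fst p \<otimes> fst p \<oplus> snd p \<otimes> snd p = g then 1 else 0)"
    unfolding r_def using fin by (subst card_sum) auto
  also have "\<dots> = (\<Sum>s\<in>F. \<Sum>t\<in>F. if s \<otimes> s \<oplus> t \<otimes> t = g then 1 else 0)"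
    by (simp add: sum.cartesian_product split_def)
  finally show ?thesis by simp
qed

lemma add_eq_iff: "a \<in> F \<Longrightarrow> b \<in> F \<Longrightarrow> e \<in> F \<Longrightarrow> (a \<oplus> b = e) = (b = e \<ominus> a)"
proof
  assume "a \<in> F" "b \<in> F" "e \<in> F" "a \<oplus> b = e"
  moreover have "b = (a \<oplus> b) \<ominus> a" using \<open>a \<in> F\<close> \<open>b \<in> F\<close> by algebra
  ultimately show "b = e \<ominus> a" by simp
next
  assume "a \<in> F" "b \<in> F" "e \<in> F" "b = e \<ominus> a"
  moreover have "a \<oplus> (e \<ominus> a) = e" using \<open>a \<in> F\<close> \<open>e \<in> F\<close> by algebra
  ultimately show "a \<oplus> b = e" by simp
qed

lemma cnt_Suc2: assumes e: "e \<in> F"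
  shows "cnt (Suc (Suc n)) e = (real q + 1) * real q ^ n - real q * cnt n e"
proof -
  define X where "X = (\<lambda>y s t. if bil n y y \<oplus> s \<otimes> s \<oplus> t \<otimes> t = e then (1::real) else 0)"
  have "cnt (Suc (Suc n)) e = (\<Sum>x\<in>vecs (Suc (Suc n)). if bil (Suc (Suc n)) x x = e then 1 else 0)"
    unfolding cnt_def using vecs_fin by (rule card_sum)
  also have "\<dots> = (\<Sum>t\<in>F. \<Sum>s\<in>F. \<Sum>y\<in>vecs n. X y s t)"
    unfolding split_sum X_def
    by (intro sum.cong refl) (simp add: bil_upd upd_vecs)
  also have "\<dots> = (\<Sum>t\<in>F. \<Sum>y\<in>vecs n. \<Sum>s\<in>F. X y s t)"
    by (rule sum.cong[OF refl]) (rule sum.swap)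
  also have "\<dots> = (\<Sum>y\<in>vecs n. \<Sum>t\<in>F. \<Sum>s\<in>F. X y s t)"
    by (rule sum.swap)
  also have "\<dots> = (\<Sum>y\<in>vecs n. \<Sum>s\<in>F. \<Sum>t\<in>F. X y s t)"
    by (rule sum.cong[OF refl]) (rule sum.swap)
  also have "\<dots> = (\<Sum>y\<in>vecs n. \<Sum>s\<in>F. \<Sum>t\<in>F. if s \<otimes> s \<oplus> t \<otimes> t = e \<ominus> bil n y y then 1 else 0)"
  proof (intro sum.cong refl)
    fix y s t assume yst: "y \<in> vecs n" "s \<in> F" "t \<in> F"
    hence "bil n y y \<oplus> s \<otimes> s \<oplus> t \<otimes> t = bil n y y \<oplus> (s \<otimes> s \<oplus> t \<otimes> t)" using bil_closed by (simp add: a_assoc)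
    hence "(bil n y y \<oplus> s \<otimes> s \<oplus> t \<otimes> t = e) = (s \<otimes> s \<oplus> t \<otimes> t = e \<ominus> bil n y y)"
      using add_eq_iff[of "bil n y y" "s \<otimes> s \<oplus> t \<otimes> t" e] e bil_closed yst by simp
    thus "X y s t = (if s \<otimes> s \<oplus> t \<otimes> t = e \<ominus> bil n y y then 1 else 0)"
      by (simp add: X_def)
  qed
  also have "\<dots> = (\<Sum>y\<in>vecs n. real (r (e \<ominus> bil n y y)))"
    using e bil_closed by (intro sum.cong refl r_sum2) auto
  also have "\<dots> = (\<Sum>y\<in>vecs n. (real q + 1) - real q * (if bil n y y = e then 1 else 0))"
  proof (intro sum.cong refl)
    fix y assume y: "y \<in> vecs n"
    have "(e \<ominus> bil n y y = \<zero>) = (bil n y y = e)" using e y bil_closed r_right_minus_eq by auto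
    thus "real (r (e \<ominus> bil n y y)) = (real q + 1) - real q * (if bil n y y = e then 1 else 0)"
      using r_val[of "e \<ominus> bil n y y"] e y bil_closed by auto
  qed
  also have "\<dots> = (real q + 1) * real q ^ n - real q * cnt n e"
    unfolding cnt_def card_sum[OF vecs_fin] sum_subtractf sum_distrib_left[symmetric]
    by (simp add: vecs_card)
  finally show ?thesis .
qed


lemma cnt0: "cnt 0 e = (if e = \<zero> then 1 else 0)"
  by (simp add: cnt_def vecs_def bil_def PiE_empty_domain)

lemma cnt_even: assumes e: "e \<in> F"
  shows "real q * cnt (2*j) e = real q ^ (2*j) +
     (if e = \<zero> then (-1) ^ j * (real q - 1) * real q ^ j else - ((-1) ^ j * real q ^ j))"
proof (induction j)
  case 0
  show ?case by (simp add: cnt0)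
next
  case (Suc j)
  have t: "2 * Suc j = Suc (Suc (2*j))" by simp
  have h: "cnt (2 * Suc j) e = (real q + 1) * real q ^ (2*j) - real q * cnt (2*j) e"
    unfolding t by (rule cnt_Suc2[OF e])
  have "real q * cnt (2 * Suc j) e = real q * ((real q + 1) * real q ^ (2*j)) - real q * (real q * cnt (2*j) e)"
    unfolding h by (simp add: right_diff_distrib)
  also have "\<dots> = real q ^ (2 * Suc j) +
     (if e = \<zero> then (-1) ^ Suc j * (real q - 1) * real q ^ Suc j else - ((-1) ^ Suc j * real q ^ Suc j))"
    unfolding Suc.IH by (simp add: algebra_simps power2_eq_square)
  finally show ?case .
qed

end


context fq begin

definition lin :: "nat \<Rightarrow> 'a \<Rightarrow> (nat \<Rightarrow> 'a) \<Rightarrow> 'a \<Rightarrow> (nat \<Rightarrow> 'a) \<Rightarrow> (nat \<Rightarrow> 'a)" where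
  "lin n a x b y = restrict (\<lambda>i. a \<otimes> x i \<oplus> b \<otimes> y i) {..<n}"

lemma lin_vecs: "a \<in> F \<Longrightarrow> b \<in> F \<Longrightarrow> x \<in> vecs n \<Longrightarrow> y \<in> vecs n \<Longrightarrow> lin n a x b y \<in> vecs n"
  by (auto simp: lin_def vecs_def)

lemma lin_app: "i < n \<Longrightarrow> lin n a x b y i = a \<otimes> x i \<oplus> b \<otimes> y i"
  by (simp add: lin_def)

lemma vec_eqI: "x \<in> vecs n \<Longrightarrow> y \<in> vecs n \<Longrightarrow> (\<And>i. i < n \<Longrightarrow> x i = y i) \<Longrightarrow> x = y"
  by (rule ext) (metis vecs_out)

lemma bil_lin_l: assumes "a \<in> F" "b \<in> F" "x \<in> vecs n" "y \<in> vecs n" "z \<in> vecs n"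
  shows "bil n (lin n a x b y) z = a \<otimes> bil n x z \<oplus> b \<otimes> bil n y z"
proof -
  have "bil n (lin n a x b y) z = finsum R (\<lambda>i. a \<otimes> (x i \<otimes> z i) \<oplus> b \<otimes> (y i \<otimes> z i)) {..<n}"
    unfolding bil_def using assms
    by (intro finsum_cong) (auto simp: lin_app vecs_in l_distr m_assoc)
  also have "\<dots> = finsum R (\<lambda>i. a \<otimes> (x i \<otimes> z i)) {..<n} \<oplus> finsum R (\<lambda>i. b \<otimes> (y i \<otimes> z i)) {..<n}"
    using assms by (intro finsum_addf) (auto simp: vecs_in)
  also have "\<dots> = a \<otimes> bil n x z \<oplus> b \<otimes> bil n y z"
  proof -
    have "finsum R (\<lambda>i. a \<otimes> (x i \<otimes> z i)) {..<n} = a \<otimes> bil n x z"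
      unfolding bil_def using assms by (intro finsum_rdistr[symmetric]) (auto simp: vecs_in)
    moreover have "finsum R (\<lambda>i. b \<otimes> (y i \<otimes> z i)) {..<n} = b \<otimes> bil n y z"
      unfolding bil_def using assms by (intro finsum_rdistr[symmetric]) (auto simp: vecs_in)
    ultimately show ?thesis by simp
  qed
  finally show ?thesis .
qed

lemma bil_lin_r: assumes "a \<in> F" "b \<in> F" "x \<in> vecs n" "y \<in> vecs n" "z \<in> vecs n"
  shows "bil n z (lin n a x b y) = a \<otimes> bil n z x \<oplus> b \<otimes> bil n z y"
  using bil_lin_l[OF assms] bil_comm assms lin_vecs by metis

definition T :: "nat \<Rightarrow> (nat \<Rightarrow> 'a) \<Rightarrow> real" where
  "T n z = real (card {m \<in> vecs n. bil n m m = \<zero> \<and> bil n m z = \<zero>})"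

lemma T_iso: assumes bij: "bij_betw \<tau> (vecs n) (vecs n)"
  and pres: "\<And>x y. x \<in> vecs n \<Longrightarrow> y \<in> vecs n \<Longrightarrow> bil n (\<tau> x) (\<tau> y) = bil n x y"
  and z: "z \<in> vecs n"
  shows "T n (\<tau> z) = T n z"
proof -
  let ?A = "{m \<in> vecs n. bil n m m = \<zero> \<and> bil n m z = \<zero>}"
  have surj: "\<tau> ` vecs n = vecs n" using bij by (rule bij_betw_imp_surj_on)
  have "{m \<in> vecs n. bil n m m = \<zero> \<and> bil n m (\<tau> z) = \<zero>} = \<tau> ` ?A"
  proof
    show "\<tau> ` ?A \<subseteq> {m \<in> vecs n. bil n m m = \<zero> \<and> bil n m (\<tau> z) = \<zero>}"
    proof
      fix m' assume "m' \<in> \<tau> ` ?A"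
      then obtain m where m: "m \<in> ?A" "m' = \<tau> m" by blast
      hence "m' \<in> vecs n" using surj by blast
      thus "m' \<in> {m \<in> vecs n. bil n m m = \<zero> \<and> bil n m (\<tau> z) = \<zero>}"
        using m pres[of m m] pres[of m z] z by simp
    qed
    show "{m \<in> vecs n. bil n m m = \<zero> \<and> bil n m (\<tau> z) = \<zero>} \<subseteq> \<tau> ` ?A"
    proof
      fix m' assume m': "m' \<in> {m \<in> vecs n. bil n m m = \<zero> \<and> bil n m (\<tau> z) = \<zero>}"
      hence "m' \<in> \<tau> ` vecs n" using surj by simp
      then obtain m where m: "m \<in> vecs n" "m' = \<tau> m" by blast
      thus "m' \<in> \<tau> ` ?A" using m' pres[of m m] pres[of m z] z by auto
    qed
  qed
  moreover have "inj_on \<tau> ?A"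
    using bij_betw_imp_inj_on[OF bij] by (rule inj_on_subset) auto
  ultimately show ?thesis unfolding T_def by (simp add: card_image)
qed

abbreviation "two \<equiv> \<one> \<oplus> \<one>"

definition refl :: "nat \<Rightarrow> (nat \<Rightarrow> 'a) \<Rightarrow> (nat \<Rightarrow> 'a) \<Rightarrow> (nat \<Rightarrow> 'a)" where
  "refl n v x = lin n \<one> x (\<ominus> (two \<otimes> bil n x v \<otimes> inv (bil n v v))) v"

context
  fixes n v assumes v: "v \<in> vecs n" and Qv: "bil n v v \<noteq> \<zero>"
begin

lemma iQv: "inv (bil n v v) \<in> F" "bil n v v \<otimes> inv (bil n v v) = \<one>" "inv (bil n v v) \<otimes> bil n v v = \<one>"
  using Qv bil_closed[OF v v] by (auto simp: field_Units)

lemma refl_vecs: "x \<in> vecs n \<Longrightarrow> refl n v x \<in> vecs n"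
  unfolding refl_def using v iQv bil_closed by (intro lin_vecs) auto

lemma refl_bil: assumes x: "x \<in> vecs n" and y: "y \<in> vecs n"
  shows "bil n (refl n v x) (refl n v y) = bil n x y"
proof -
  define w where "w = inv (bil n v v)"
  define bx where "bx = bil n x v"
  define by' where "by' = bil n y v"
  have c: "w \<in> F" "bx \<in> F" "by' \<in> F" "bil n x y \<in> F" "bil n v v \<in> F"
    using iQv v x y bil_closed by (auto simp: w_def bx_def by'_def)
  have vy: "bil n v y = by'" using bil_comm v y by (simp add: by'_def)
  have "bil n (refl n v x) (refl n v y) =
     bil n x y \<oplus> \<ominus> (two \<otimes> bx \<otimes> w) \<otimes> by' \<oplus>
        \<ominus> (two \<otimes> by' \<otimes> w) \<otimes> (bx \<oplus> \<ominus> (two \<otimes> bx \<otimes> w) \<otimes> bil n v v)"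
    unfolding refl_def using x y v c
    by (simp add: bil_lin_l bil_lin_r lin_vecs vy w_def[symmetric] bx_def[symmetric] by'_def[symmetric])
  also have "\<dots> = bil n x y \<oplus> (two \<otimes> two \<otimes> bx \<otimes> by' \<otimes> w) \<otimes> (w \<otimes> bil n v v \<ominus> \<one>)"
    using c by algebra
  also have "\<dots> = bil n x y" using c iQv by (simp add: w_def minus_eq r_neg)
  finally show ?thesis .
qed

lemma refl_refl: assumes x: "x \<in> vecs n" shows "refl n v (refl n v x) = x"
proof -
  define w where "w = inv (bil n v v)"
  define bx where "bx = bil n x v"
  have c: "w \<in> F" "bx \<in> F" "bil n v v \<in> F"
    using iQv v x bil_closed by (auto simp: w_def bx_def)
  have "bil n (refl n v x) v = \<one> \<otimes> bx \<oplus> (\<ominus> (two \<otimes> bx \<otimes> w)) \<otimes> bil n v v"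
    unfolding refl_def using x v c by (simp add: bil_lin_l w_def[symmetric] bx_def[symmetric])
  also have "\<dots> = \<ominus> bx \<oplus> (two \<otimes> bx) \<otimes> (\<one> \<ominus> w \<otimes> bil n v v)" using c by algebra
  also have "\<dots> = \<ominus> bx" using c iQv by (simp add: w_def minus_eq r_neg)
  finally have b: "bil n (refl n v x) v = \<ominus> bx" .
  show ?thesis
  proof (rule vec_eqI)
    show "refl n v (refl n v x) \<in> vecs n" "x \<in> vecs n" using x refl_vecs by auto
    fix i assume i: "i < n"
    have xi: "x i \<in> F" "v i \<in> F" using x v i vecs_in by auto
    define rx where "rx = refl n v x"
    have r1: "rx i = \<one> \<otimes> x i \<oplus> \<ominus> (two \<otimes> bx \<otimes> w) \<otimes> v i"
      unfolding rx_def refl_def using i by (simp add: lin_app w_def bx_def)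
    have "refl n v rx i = \<one> \<otimes> rx i \<oplus> \<ominus> (two \<otimes> bil n rx v \<otimes> w) \<otimes> v i"
      unfolding refl_def using i by (simp add: lin_app w_def)
    also have "\<dots> = \<one> \<otimes> (\<one> \<otimes> x i \<oplus> \<ominus> (two \<otimes> bx \<otimes> w) \<otimes> v i) \<oplus> \<ominus> (two \<otimes> \<ominus> bx \<otimes> w) \<otimes> v i"
      using b r1 by (simp add: rx_def)
    also have "\<dots> = x i" using c xi by algebra
    finally show "refl n v (refl n v x) i = x i" unfolding rx_def .
  qed
qed
lemma refl_bij: "bij_betw (refl n v) (vecs n) (vecs n)"
  by (rule bij_betw_byWitness[where f'="refl n v"]) (auto simp: refl_refl refl_vecs)

lemma T_refl: "z \<in> vecs n \<Longrightarrow> T n (refl n v z) = T n z"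
  by (rule T_iso[OF refl_bij refl_bil])

end

end


context fq begin

lemma sum_zero_iff: "a \<in> F \<Longrightarrow> b \<in> F \<Longrightarrow> (a \<oplus> b = \<zero>) = (a = \<ominus> b)"
  using minus_equality[of a b] l_neg by auto

lemma ind_sum1: "a \<in> F \<Longrightarrow> (\<Sum>s\<in>F. if s = a then 1 else 0) = (1::real)"
  using fin by (simp add: sum.delta')

lemma lin_eq_iff: assumes s: "\<sigma> \<in> F" "\<sigma> \<noteq> \<zero>" and x: "x \<in> F" and b: "b \<in> F"
  shows "(x \<otimes> \<sigma> \<oplus> b = \<zero>) = (x = \<ominus> b \<otimes> inv \<sigma>)"
proof
  have iv: "inv \<sigma> \<in> F" "\<sigma> \<otimes> inv \<sigma> = \<one>" using s by (auto simp: field_Units)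
  assume h: "x \<otimes> \<sigma> \<oplus> b = \<zero>"
  hence "x \<otimes> \<sigma> = \<ominus> b" using sum_zero_iff x s b by simp
  hence "x \<otimes> \<sigma> \<otimes> inv \<sigma> = \<ominus> b \<otimes> inv \<sigma>" by simp
  thus "x = \<ominus> b \<otimes> inv \<sigma>" using iv x s by (simp add: m_assoc)
next
  have iv: "inv \<sigma> \<in> F" "inv \<sigma> \<otimes> \<sigma> = \<one>" using s by (auto simp: field_Units)
  assume "x = \<ominus> b \<otimes> inv \<sigma>"
  hence "x \<otimes> \<sigma> = \<ominus> b" using iv b s by (simp add: m_assoc)
  thus "x \<otimes> \<sigma> \<oplus> b = \<zero>" using b by (simp add: l_neg)
qed

lemma Lcount: assumes s: "\<sigma> \<in> F" and t: "\<tau> \<in> F" and nz: "\<not> (\<sigma> = \<zero> \<and> \<tau> = \<zero>)"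
  shows "(\<Sum>t\<in>F. \<Sum>s\<in>F. if s \<otimes> \<sigma> \<oplus> t \<otimes> \<tau> = \<zero> then 1 else 0) = (real q)"
proof (cases "\<sigma> = \<zero>")
  case False
  have "(\<Sum>t\<in>F. \<Sum>s\<in>F. if s \<otimes> \<sigma> \<oplus> t \<otimes> \<tau> = \<zero> then 1 else 0) = (\<Sum>t\<in>F. (1::real))"
  proof (rule sum.cong[OF refl])
    fix t assume tF: "t \<in> F"
    have "(\<Sum>s\<in>F. if s \<otimes> \<sigma> \<oplus> t \<otimes> \<tau> = \<zero> then 1 else 0) = (\<Sum>s\<in>F. if s = \<ominus> (t \<otimes> \<tau>) \<otimes> inv \<sigma> then (1::real) else 0)"
      using lin_eq_iff[OF s False _ m_closed[OF tF t]] by (intro sum.cong refl) simp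
    also have "\<dots> = 1" using tF t s False by (intro ind_sum1) (auto simp: field_Units)
    finally show "(\<Sum>s\<in>F. if s \<otimes> \<sigma> \<oplus> t \<otimes> \<tau> = \<zero> then 1 else 0) = (1::real)" .
  qed
  thus ?thesis by simp
next
  case True
  hence tn: "\<tau> \<noteq> \<zero>" using nz by simp
  have "(\<Sum>t\<in>F. \<Sum>s\<in>F. if s \<otimes> \<sigma> \<oplus> t \<otimes> \<tau> = \<zero> then 1 else 0) = (\<Sum>t\<in>F. \<Sum>s\<in>F. if t = \<zero> then (1::real) else 0)"
  proof (intro sum.cong refl)
    fix t s assume "t \<in> F" "s \<in> F"
    thus "(if s \<otimes> \<sigma> \<oplus> t \<otimes> \<tau> = \<zero> then 1 else 0) = (if t = \<zero> then (1::real) else 0)"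
      using True tn t integral by auto
  qed
  also have "\<dots> = (\<Sum>t\<in>F. if t = \<zero> then real q else 0)" by (intro sum.cong refl) auto
  also have "\<dots> = real q" using fin by (simp add: sum.delta')
  finally show ?thesis .
qed

definition zv :: "nat \<Rightarrow> nat \<Rightarrow> 'a" where "zv m = restrict (\<lambda>_. \<zero>) {..<m}"

lemma zv_vecs: "zv m \<in> vecs m" by (simp add: zv_def vecs_def)
lemma bil_zv: "y \<in> vecs m \<Longrightarrow> bil m y (zv m) = \<zero>"
proof -
  assume y: "y \<in> vecs m"
  have "bil m y (zv m) = finsum R (\<lambda>i. \<zero>) {..<m}"
    unfolding bil_def zv_def using y by (intro finsum_cong) (auto simp: vecs_in)
  thus ?thesis by simp
qed


lemma cnt_const: assumes g: "g \<in> F" "g \<noteq> \<zero>" shows "cnt (2*j) g = cnt (2*j) \<one>"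
proof -
  have "real q * cnt (2*j) g = real q * cnt (2*j) \<one>"
    using cnt_even[OF g(1), of j] cnt_even[OF one_closed, of j] g by simp
  thus ?thesis using q_gt1 by simp
qed

lemma cnt_total: "cnt (2*j) \<zero> + (real q - 1) * cnt (2*j) \<one> = real q ^ (2*j)"
proof -
  have a: "real q * cnt (2*j) \<zero> = real q ^ (2*j) + (-1) ^ j * (real q - 1) * real q ^ j"
    using cnt_even[OF zero_closed, of j] by simp
  have b: "real q * cnt (2*j) \<one> = real q ^ (2*j) - (-1) ^ j * real q ^ j"
    using cnt_even[OF one_closed, of j] by simp
  have "real q * (cnt (2*j) \<zero> + (real q - 1) * cnt (2*j) \<one>) = real q * cnt (2*j) \<zero> + (real q - 1) * (real q * cnt (2*j) \<one>)"
    by (simp add: algebra_simps)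
  also have "\<dots> = real q * real q ^ (2*j)" unfolding a b by (simp add: algebra_simps)
  finally show ?thesis using q_gt1 by simp
qed

lemma T_std: assumes s: "\<sigma> \<in> F" and t: "\<tau> \<in> F" and c: "\<sigma> \<otimes> \<sigma> \<oplus> \<tau> \<otimes> \<tau> \<noteq> \<zero>" and m: "m = 2*j"
  shows "T (Suc (Suc m)) (((zv m)(m := \<sigma>))(Suc m := \<tau>)) = real q ^ m"
proof -
  define zz where "zz = (zv m)(m := \<sigma>)"
  have zz: "zz \<in> vecs (Suc m)" using zv_vecs s by (simp add: zz_def upd_vecs)
  define C0 where "C0 = cnt m \<zero>"
  define E where "E = cnt m \<one>"
  have nz: "\<not> (\<sigma> = \<zero> \<and> \<tau> = \<zero>)" using c by auto
  have "(\<Sum>t\<in>F. \<Sum>s\<in>F. if s = \<zero> then (if t = \<zero> then 1 else 0) else 0) = (\<Sum>t\<in>F. if t = \<zero> then (1::real) else 0)"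
    using fin by (intro sum.cong refl) (simp add: sum.delta')
  also have "\<dots> = 1" using fin by (simp add: sum.delta')
  finally have SB: "(\<Sum>t\<in>F. \<Sum>s\<in>F. if s = \<zero> then (if t = \<zero> then 1 else 0) else 0) = (1::real)" .
  have "T (Suc (Suc m)) (zz(Suc m := \<tau>)) = (\<Sum>x\<in>vecs (Suc (Suc m)).
          if bil (Suc (Suc m)) x x = \<zero> \<and> bil (Suc (Suc m)) x (zz(Suc m := \<tau>)) = \<zero> then 1 else 0)"
    unfolding T_def by (rule card_sum[OF vecs_fin])
  also have "\<dots> = (\<Sum>t\<in>F. \<Sum>s\<in>F. \<Sum>y\<in>vecs m.
          if bil (Suc (Suc m)) ((y(m := s))(Suc m := t)) ((y(m := s))(Suc m := t)) = \<zero> \<and>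
             bil (Suc (Suc m)) ((y(m := s))(Suc m := t)) (zz(Suc m := \<tau>)) = \<zero> then 1 else 0)"
    by (simp add: split_sum)
  also have "\<dots> = (\<Sum>t\<in>F. \<Sum>s\<in>F. \<Sum>y\<in>vecs m.
          if bil m y y = \<ominus> (s \<otimes> s \<oplus> t \<otimes> t) \<and> s \<otimes> \<sigma> \<oplus> t \<otimes> \<tau> = \<zero> then 1 else 0)"
  proof (intro sum.cong refl)
    fix t s y assume st: "t \<in> F" "s \<in> F" and y: "y \<in> vecs m"
    have ys: "y(m := s) \<in> vecs (Suc m)" using y st by (simp add: upd_vecs)
    have yy: "bil m y y \<in> F" using bil_closed y by auto
    have e1: "bil (Suc (Suc m)) ((y(m := s))(Suc m := t)) ((y(m := s))(Suc m := t)) = bil m y y \<oplus> (s \<otimes> s \<oplus> t \<otimes> t)"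
      using bil_upd[OF ys ys st(1) st(1)] bil_upd[OF y y st(2) st(2)] yy st by (simp add: a_assoc)
    have e2: "bil (Suc (Suc m)) ((y(m := s))(Suc m := t)) (zz(Suc m := \<tau>)) = s \<otimes> \<sigma> \<oplus> t \<otimes> \<tau>"
      using bil_upd[OF ys zz st(1) t] bil_upd[OF y zv_vecs st(2) s] bil_zv[OF y] st s t
      by (simp add: zz_def)
    show "(if bil (Suc (Suc m)) ((y(m := s))(Suc m := t)) ((y(m := s))(Suc m := t)) = \<zero> \<and>
             bil (Suc (Suc m)) ((y(m := s))(Suc m := t)) (zz(Suc m := \<tau>)) = \<zero> then 1 else 0) =
          (if bil m y y = \<ominus> (s \<otimes> s \<oplus> t \<otimes> t) \<and> s \<otimes> \<sigma> \<oplus> t \<otimes> \<tau> = \<zero> then (1::real) else 0)"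
      unfolding e1 e2 using sum_zero_iff[OF yy, of "s \<otimes> s \<oplus> t \<otimes> t"] st by simp
  qed
  also have "\<dots> = (\<Sum>t\<in>F. \<Sum>s\<in>F. if s \<otimes> \<sigma> \<oplus> t \<otimes> \<tau> = \<zero> then cnt m (\<ominus> (s \<otimes> s \<oplus> t \<otimes> t)) else 0)"
  proof (intro sum.cong refl)
    fix t s assume st: "t \<in> F" "s \<in> F"
    show "(\<Sum>y\<in>vecs m. if bil m y y = \<ominus> (s \<otimes> s \<oplus> t \<otimes> t) \<and> s \<otimes> \<sigma> \<oplus> t \<otimes> \<tau> = \<zero> then 1 else 0) =
          (if s \<otimes> \<sigma> \<oplus> t \<otimes> \<tau> = \<zero> then cnt m (\<ominus> (s \<otimes> s \<oplus> t \<otimes> t)) else 0)"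
      unfolding cnt_def card_sum[OF vecs_fin] by simp
  qed
  also have "\<dots> = (\<Sum>t\<in>F. \<Sum>s\<in>F. E * (if s \<otimes> \<sigma> \<oplus> t \<otimes> \<tau> = \<zero> then 1 else 0) +
                      (C0 - E) * (if s = \<zero> then (if t = \<zero> then 1 else 0) else 0))"
  proof (intro sum.cong refl)
    fix t s assume st: "t \<in> F" "s \<in> F"
    show "(if s \<otimes> \<sigma> \<oplus> t \<otimes> \<tau> = \<zero> then cnt m (\<ominus> (s \<otimes> s \<oplus> t \<otimes> t)) else 0) =
          E * (if s \<otimes> \<sigma> \<oplus> t \<otimes> \<tau> = \<zero> then 1 else 0) + (C0 - E) * (if s = \<zero> then (if t = \<zero> then 1 else 0) else 0)"
    proof (cases "s = \<zero> \<and> t = \<zero>")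
      case True thus ?thesis using s t by (simp add: C0_def)
    next
      case False
      hence "s \<otimes> s \<oplus> t \<otimes> t \<noteq> \<zero>" using sq_sum0 st by blast
      hence "\<ominus> (s \<otimes> s \<oplus> t \<otimes> t) \<noteq> \<zero>" using add.inv_eq_1_iff[of "s \<otimes> s \<oplus> t \<otimes> t"] st by simp
      hence "cnt m (\<ominus> (s \<otimes> s \<oplus> t \<otimes> t)) = E" unfolding E_def m using cnt_const[of "\<ominus> (s \<otimes> s \<oplus> t \<otimes> t)" j] st by simp
      thus ?thesis using False by auto
    qed
  qed
  also have "\<dots> = E * (\<Sum>t\<in>F. \<Sum>s\<in>F. if s \<otimes> \<sigma> \<oplus> t \<otimes> \<tau> = \<zero> then 1 else 0) +
      (C0 - E) * (\<Sum>t\<in>F. \<Sum>s\<in>F. if s = \<zero> then (if t = \<zero> then 1 else 0) else 0)"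
    by (simp add: sum.distrib sum_distrib_left)
  also have "\<dots> = E * real q + (C0 - E)" using Lcount[OF s t nz] SB by simp
  also have "\<dots> = real q ^ m" using cnt_total[of j] unfolding C0_def E_def m by (simp add: algebra_simps)
  finally show ?thesis unfolding zz_def .
qed


lemma T_scale: assumes a: "a \<in> F" "a \<noteq> \<zero>" and z: "z \<in> vecs n"
  shows "T n (lin n a z \<zero> z) = T n z"
proof -
  have "{m \<in> vecs n. bil n m m = \<zero> \<and> bil n m (lin n a z \<zero> z) = \<zero>} = {m \<in> vecs n. bil n m m = \<zero> \<and> bil n m z = \<zero>}"
  proof (intro Collect_cong conj_cong refl)
    fix m assume m: "m \<in> vecs n"
    have "bil n m (lin n a z \<zero> z) = a \<otimes> bil n m z" using bil_lin_r[OF a(1) zero_closed z z m] bil_closed[OF m z] a by simp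
    thus "(bil n m (lin n a z \<zero> z) = \<zero>) = (bil n m z = \<zero>)" using a bil_closed[OF m z] integral by auto
  qed
  thus ?thesis by (simp add: T_def)
qed

lemma Qlin: assumes z: "z \<in> vecs n" and z': "z' \<in> vecs n" and e: "e \<in> F"
  shows "bil n (lin n \<one> z e z') (lin n \<one> z e z') = bil n z z \<oplus> two \<otimes> e \<otimes> bil n z z' \<oplus> e \<otimes> e \<otimes> bil n z' z'"
proof -
  have c: "bil n z z \<in> F" "bil n z z' \<in> F" "bil n z' z' \<in> F" using bil_closed z z' by auto
  have "bil n (lin n \<one> z e z') (lin n \<one> z e z') =
     \<one> \<otimes> (\<one> \<otimes> bil n z z \<oplus> e \<otimes> bil n z z') \<oplus> e \<otimes> (\<one> \<otimes> bil n z z' \<oplus> e \<otimes> bil n z' z')"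
    using z z' e bil_comm[OF z' z] by (simp add: bil_lin_l bil_lin_r lin_vecs)
  also have "\<dots> = bil n z z \<oplus> two \<otimes> e \<otimes> bil n z z' \<oplus> e \<otimes> e \<otimes> bil n z' z'"
    using c e by algebra
  finally show ?thesis .
qed

lemma refl_to: assumes z: "z \<in> vecs n" and z': "z' \<in> vecs n" and Q: "bil n z z = bil n z' z'"
  and e: "e \<in> F" "e \<otimes> e = \<one>" and Qv: "bil n (lin n \<one> z e z') (lin n \<one> z e z') \<noteq> \<zero>"
  shows "refl n (lin n \<one> z e z') z = lin n (\<ominus> e) z' \<zero> z'"
proof -
  define v where "v = lin n \<one> z e z'"
  have v: "v \<in> vecs n" using z z' e by (simp add: v_def lin_vecs)
  have c: "bil n z z \<in> F" "bil n z z' \<in> F" "bil n v v \<in> F" using bil_closed z z' v by auto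
  have iQ: "inv (bil n v v) \<in> F" "bil n v v \<otimes> inv (bil n v v) = \<one>" using Qv c by (auto simp: v_def field_Units)
  have bzv: "bil n z v = \<one> \<otimes> bil n z z \<oplus> e \<otimes> bil n z z'" unfolding v_def using z z' e by (simp add: bil_lin_r)
  have "bil n v v = bil n z z \<oplus> two \<otimes> e \<otimes> bil n z z' \<oplus> e \<otimes> e \<otimes> bil n z z"
    unfolding v_def using Qlin[OF z z' e(1)] Q by simp
  also have "\<dots> = bil n z z \<oplus> two \<otimes> e \<otimes> bil n z z' \<oplus> bil n z z" using e c by simp
  also have "\<dots> = two \<otimes> (\<one> \<otimes> bil n z z \<oplus> e \<otimes> bil n z z')" using c e(1) by algebra
  finally have "two \<otimes> bil n z v = bil n v v" using bzv by simp
  hence lam: "two \<otimes> bil n z v \<otimes> inv (bil n v v) = \<one>" using iQ by simp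
  show ?thesis
  proof (rule vec_eqI)
    show "refl n (lin n \<one> z e z') z \<in> vecs n" "lin n (\<ominus> e) z' \<zero> z' \<in> vecs n"
      using refl_vecs[OF v] Qv v z z' e by (auto simp: v_def[symmetric] lin_vecs)
    fix i assume i: "i < n"
    have ci: "z i \<in> F" "z' i \<in> F" using i z z' vecs_in by auto
    have "refl n v z i = \<one> \<otimes> z i \<oplus> \<ominus> \<one> \<otimes> (\<one> \<otimes> z i \<oplus> e \<otimes> z' i)"
      unfolding refl_def lam using i by (simp add: lin_app v_def)
    also have "\<dots> = \<ominus> e \<otimes> z' i \<oplus> \<zero> \<otimes> z' i" using ci e(1) by algebra
    finally show "refl n (lin n \<one> z e z') z i = lin n (\<ominus> e) z' \<zero> z' i" using i by (simp add: lin_app v_def)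
  qed
qed


lemma T_nonnull: assumes m: "m = 2*j" and z: "z \<in> vecs (Suc (Suc m))" and c: "bil (Suc (Suc m)) z z \<noteq> \<zero>"
  shows "T (Suc (Suc m)) z = real q ^ m"
proof -
  let ?N = "Suc (Suc m)"
  have cF: "bil ?N z z \<in> F" using bil_closed z by auto
  obtain \<sigma> \<tau> where st: "\<sigma> \<in> F" "\<tau> \<in> F" and sq: "\<sigma> \<otimes> \<sigma> \<oplus> \<tau> \<otimes> \<tau> = bil ?N z z"
    using two_sq[OF cF] by blast
  define zz where "zz = (zv m)(m := \<sigma>)"
  define z' where "z' = zz(Suc m := \<tau>)"
  have zz: "zz \<in> vecs (Suc m)" using zv_vecs st by (simp add: zz_def upd_vecs)
  have z': "z' \<in> vecs ?N" using zz st by (simp add: z'_def upd_vecs)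
  have "bil ?N z' z' = bil m (zv m) (zv m) \<oplus> \<sigma> \<otimes> \<sigma> \<oplus> \<tau> \<otimes> \<tau>"
    unfolding z'_def zz_def using bil_upd[OF zz zz st(2) st(2)] bil_upd[OF zv_vecs zv_vecs st(1) st(1)]
    by (simp add: zz_def)
  also have "\<dots> = bil ?N z z" using bil_zv[OF zv_vecs] sq st by simp
  finally have Qz': "bil ?N z z = bil ?N z' z'" by simp
  have Tz': "T ?N z' = real q ^ m" unfolding z'_def zz_def using T_std[OF st _ m] sq c by simp
  have n1: "\<ominus> \<one> \<in> F" "\<ominus> \<one> \<otimes> \<ominus> \<one> = \<one>" by (simp_all add: l_minus r_minus)
  show ?thesis
  proof (cases "bil ?N (lin ?N \<one> z (\<ominus> \<one>) z') (lin ?N \<one> z (\<ominus> \<one>) z') = \<zero>")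
    case False
    have v: "lin ?N \<one> z (\<ominus> \<one>) z' \<in> vecs ?N" using z z' by (simp add: lin_vecs)
    have "T ?N z = T ?N (refl ?N (lin ?N \<one> z (\<ominus> \<one>) z') z)"
      using T_refl[OF v False z] by simp
    also have "\<dots> = T ?N (lin ?N (\<ominus> (\<ominus> \<one>)) z' \<zero> z')" using refl_to[OF z z' Qz' n1 False] by simp
    also have "\<dots> = T ?N z'" using T_scale[OF _ _ z'] by simp
    finally show ?thesis using Tz' by simp
  next
    case True
    have b: "bil ?N z z' \<in> F" using bil_closed z z' by auto
    have "bil ?N (lin ?N \<one> z \<one> z') (lin ?N \<one> z \<one> z') \<oplus> bil ?N (lin ?N \<one> z (\<ominus> \<one>) z') (lin ?N \<one> z (\<ominus> \<one>) z')
        = (bil ?N z z \<oplus> two \<otimes> \<one> \<otimes> bil ?N z z' \<oplus> \<one> \<otimes> \<one> \<otimes> bil ?N z z) \<oplus>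
          (bil ?N z z \<oplus> two \<otimes> \<ominus> \<one> \<otimes> bil ?N z z' \<oplus> \<ominus> \<one> \<otimes> \<ominus> \<one> \<otimes> bil ?N z z)"
      using Qlin[OF z z' one_closed] Qlin[OF z z' n1(1)] Qz' by simp
    also have "\<dots> = two \<otimes> two \<otimes> bil ?N z z" using cF b by algebra
    finally have "bil ?N (lin ?N \<one> z \<one> z') (lin ?N \<one> z \<one> z') = two \<otimes> two \<otimes> bil ?N z z"
      using True z z' by (simp add: lin_vecs bil_closed)
    moreover have "two \<otimes> two \<otimes> bil ?N z z \<noteq> \<zero>" using two_nz c cF integral by (metis a_closed m_closed one_closed)
    ultimately have Qv: "bil ?N (lin ?N \<one> z \<one> z') (lin ?N \<one> z \<one> z') \<noteq> \<zero>" by simp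
    have v: "lin ?N \<one> z \<one> z' \<in> vecs ?N" using z z' by (simp add: lin_vecs)
    have "T ?N z = T ?N (refl ?N (lin ?N \<one> z \<one> z') z)"
      using T_refl[OF v Qv z] by simp
    also have "\<dots> = T ?N (lin ?N (\<ominus> \<one>) z' \<zero> z')" using refl_to[OF z z' Qz' one_closed _ Qv] by simp
    also have "\<dots> = T ?N z'" using T_scale[OF n1(1) _ z'] by (metis add.inv_eq_1_iff one_closed one_not_zero)
    finally show ?thesis using Tz' by simp
  qed
qed

end


context fq begin

lemma partner: assumes z: "z \<in> vecs n" and i: "i < n" "z i \<noteq> \<zero>" and Qz: "bil n z z = \<zero>"
  shows "\<exists>w \<in> vecs n. bil n z w = \<one> \<and> bil n w w = \<zero>"
proof -
  have zi: "z i \<in> F" using z i vecs_in by auto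
  have izi: "inv (z i) \<in> F" "z i \<otimes> inv (z i) = \<one>" using zi i by (auto simp: field_Units)
  define w0 where "w0 = restrict (\<lambda>j. if j = i then inv (z i) else \<zero>) {..<n}"
  have w0: "w0 \<in> vecs n" using izi by (auto simp: w0_def vecs_def)
  have "bil n z w0 = finsum R (\<lambda>j. if j = i then \<one> else \<zero>) {..<n}"
    unfolding bil_def w0_def using z izi by (intro finsum_cong') (auto simp: vecs_in)
  also have "\<dots> = \<one>" using i add.finprod_singleton_swap[of i "{..<n}" "\<lambda>_. \<one>"] by simp
  finally have bzw0: "bil n z w0 = \<one>" .
  have i2: "inv two \<in> F" "two \<otimes> inv two = \<one>" using two_nz by (auto simp: field_Units)
  have Qw0: "bil n w0 w0 \<in> F" using bil_closed w0 by auto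
  define e where "e = \<ominus> (bil n w0 w0 \<otimes> inv two)"
  have e: "e \<in> F" using i2 Qw0 by (simp add: e_def)
  define w where "w = lin n \<one> w0 e z"
  have w: "w \<in> vecs n" using w0 z e by (simp add: w_def lin_vecs)
  have "bil n z w = \<one> \<otimes> bil n z w0 \<oplus> e \<otimes> bil n z z" unfolding w_def using w0 z e by (simp add: bil_lin_r)
  hence b1: "bil n z w = \<one>" using bzw0 Qz e by simp
  have "bil n w w = bil n w0 w0 \<oplus> two \<otimes> e \<otimes> bil n w0 z \<oplus> e \<otimes> e \<otimes> bil n z z"
    unfolding w_def by (rule Qlin[OF w0 z e])
  also have "\<dots> = bil n w0 w0 \<oplus> \<ominus> (bil n w0 w0 \<otimes> (two \<otimes> inv two))"
    using bil_comm[OF w0 z] bzw0 Qz e Qw0 i2(1) unfolding e_def by (simp add: m_ac r_minus)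
  also have "\<dots> = \<zero>" using i2 Qw0 by (simp add: r_neg)
  finally show ?thesis using w b1 by blast
qed

lemma hc: assumes g: "g \<in> F"
  shows "(\<Sum>a\<in>F. \<Sum>b\<in>F. if two \<otimes> a \<otimes> b = g then 1 else 0) = (if g = \<zero> then 2 * real q - 1 else real q - 1)"
proof -
  have s1: "(\<Sum>b\<in>F. if two \<otimes> a \<otimes> b = g then 1 else 0) = (1::real)" if a: "a \<in> F" "a \<noteq> \<zero>" for a
  proof -
    have k: "two \<otimes> a \<in> F" "two \<otimes> a \<noteq> \<zero>" using a two_nz integral by auto
    have ik: "inv (two \<otimes> a) \<in> F" "inv (two \<otimes> a) \<otimes> (two \<otimes> a) = \<one>" using k by (auto simp: field_Units)
    have "(\<Sum>b\<in>F. if two \<otimes> a \<otimes> b = g then 1 else 0) = (\<Sum>b\<in>F. if b = inv (two \<otimes> a) \<otimes> g then (1::real) else 0)"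
    proof (intro sum.cong refl)
      fix b assume b: "b \<in> F"
      have "(two \<otimes> a \<otimes> b = g) = (b = inv (two \<otimes> a) \<otimes> g)"
      proof
        assume "two \<otimes> a \<otimes> b = g"
        hence "inv (two \<otimes> a) \<otimes> (two \<otimes> a \<otimes> b) = inv (two \<otimes> a) \<otimes> g" by simp
        thus "b = inv (two \<otimes> a) \<otimes> g" using ik k b by (simp add: m_assoc[symmetric])
      next
        assume "b = inv (two \<otimes> a) \<otimes> g"
        hence "two \<otimes> a \<otimes> b = (two \<otimes> a \<otimes> inv (two \<otimes> a)) \<otimes> g" using ik k g by (simp add: m_assoc)
        also have "two \<otimes> a \<otimes> inv (two \<otimes> a) = \<one>" using ik k by (simp add: m_comm)
        finally show "two \<otimes> a \<otimes> b = g" using g by simp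
      qed
      thus "(if two \<otimes> a \<otimes> b = g then 1 else 0) = (if b = inv (two \<otimes> a) \<otimes> g then (1::real) else 0)" by simp
    qed
    also have "\<dots> = 1" using ik g by (intro ind_sum1) simp
    finally show ?thesis .
  qed
  have "(\<Sum>a\<in>F. \<Sum>b\<in>F. if two \<otimes> a \<otimes> b = g then 1 else 0) =
     (\<Sum>b\<in>F. if two \<otimes> \<zero> \<otimes> b = g then 1 else 0) + (\<Sum>a\<in>F - {\<zero>}. \<Sum>b\<in>F. if two \<otimes> a \<otimes> b = g then (1::real) else 0)"
    by (rule sum.remove[OF fin zero_closed])
  also have "(\<Sum>a\<in>F - {\<zero>}. \<Sum>b\<in>F. if two \<otimes> a \<otimes> b = g then (1::real) else 0) = (\<Sum>a\<in>F - {\<zero>}. 1)"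
    using s1 by (intro sum.cong refl) auto
  also have "(\<Sum>b\<in>F. if two \<otimes> \<zero> \<otimes> b = g then 1 else 0) = (if g = \<zero> then real q else 0)"
    by auto
  finally show ?thesis using fin q_gt1 by (auto simp: card_Diff_singleton of_nat_diff)
qed


lemma T_null: assumes z: "z \<in> vecs n" and i: "i < n" "z i \<noteq> \<zero>" and Qz: "bil n z z = \<zero>"
  shows "T n z = cnt n \<zero> - (real q - 1) * (real q ^ n / (real q * real q))"
proof -
  obtain w where w: "w \<in> vecs n" and bzw: "bil n z w = \<one>" and Qw: "bil n w w = \<zero>"
    using partner[OF z i Qz] by blast
  have bwz: "bil n w z = \<one>" using bzw bil_comm[OF z w] by simp
  define U where "U = {u \<in> vecs n. bil n u z = \<zero> \<and> bil n u w = \<zero>}"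
  have fU: "finite U" using vecs_fin by (simp add: U_def)
  define P where "P = (\<lambda>a b. lin n a z b w)"
  define \<Phi> where "\<Phi> = (\<lambda>x. lin n \<one> (P (fst x) (fst (snd x))) \<one> (snd (snd x)))"
  define \<Psi> where "\<Psi> = (\<lambda>v. (bil n v w, bil n v z, lin n \<one> v (\<ominus> \<one>) (P (bil n v w) (bil n v z))))"
  have Pv: "P a b \<in> vecs n" if "a \<in> F" "b \<in> F" for a b using that z w by (simp add: P_def lin_vecs)
  have Pz: "bil n (P a b) z = b" if ab: "a \<in> F" "b \<in> F" for a b
    unfolding P_def using bil_lin_l[OF ab z w z] Qz bwz ab by simp
  have Pw: "bil n (P a b) w = a" if ab: "a \<in> F" "b \<in> F" for a b
    unfolding P_def using bil_lin_l[OF ab z w w] Qw bzw ab by simp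
  have PP: "bil n (P a b) (P a b) = a \<otimes> b \<oplus> b \<otimes> a" if ab: "a \<in> F" "b \<in> F" for a b
  proof -
    have Pl: "bil n (P a b) y = a \<otimes> bil n z y \<oplus> b \<otimes> bil n w y" if "y \<in> vecs n" for y
      unfolding P_def using bil_lin_l[OF ab z w that] .
    have "bil n (P a b) (P a b) = a \<otimes> bil n z (P a b) \<oplus> b \<otimes> bil n w (P a b)"
      using Pl[OF Pv[OF ab]] .
    also have "\<dots> = a \<otimes> b \<oplus> b \<otimes> a"
      using bil_comm[OF z Pv[OF ab]] bil_comm[OF w Pv[OF ab]] Pz[OF ab] Pw[OF ab] by simp
    finally show ?thesis .
  qed
  have Pu: "bil n (P a b) u = \<zero>" if ab: "a \<in> F" "b \<in> F" and u: "u \<in> U" for a b u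
  proof -
    have uv: "u \<in> vecs n" "bil n u z = \<zero>" "bil n u w = \<zero>" using u by (auto simp: U_def)
    have "bil n (P a b) u = a \<otimes> bil n z u \<oplus> b \<otimes> bil n w u" unfolding P_def using bil_lin_l[OF ab z w uv(1)] .
    thus ?thesis using uv bil_comm[OF z uv(1)] bil_comm[OF w uv(1)] ab by simp
  qed
  have Phi_v: "\<Phi> (a, b, u) \<in> vecs n" if "a \<in> F" "b \<in> F" "u \<in> U" for a b u
    using that Pv by (simp add: \<Phi>_def U_def lin_vecs)
  have PhiQ: "bil n (\<Phi> (a, b, u)) (\<Phi> (a, b, u)) = (a \<otimes> b \<oplus> b \<otimes> a) \<oplus> bil n u u"
    if ab: "a \<in> F" "b \<in> F" and u: "u \<in> U" for a b u
  proof -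
    have uv: "u \<in> vecs n" using u by (simp add: U_def)
    have "bil n (\<Phi> (a, b, u)) (\<Phi> (a, b, u)) = bil n (P a b) (P a b) \<oplus> two \<otimes> \<one> \<otimes> bil n (P a b) u \<oplus> \<one> \<otimes> \<one> \<otimes> bil n u u"
      unfolding \<Phi>_def using Qlin[OF Pv[OF ab] uv one_closed] by simp
    thus ?thesis using PP[OF ab] Pu[OF ab u] bil_closed[OF uv uv] ab by simp
  qed
  have Phiz: "bil n (\<Phi> (a, b, u)) z = b" if ab: "a \<in> F" "b \<in> F" and u: "u \<in> U" for a b u
  proof -
    have uv: "u \<in> vecs n" "bil n u z = \<zero>" using u by (auto simp: U_def)
    show ?thesis unfolding \<Phi>_def using bil_lin_l[OF one_closed one_closed Pv[OF ab] uv(1) z] Pz[OF ab] uv ab by simp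
  qed
  have Phiw: "bil n (\<Phi> (a, b, u)) w = a" if ab: "a \<in> F" "b \<in> F" and u: "u \<in> U" for a b u
  proof -
    have uv: "u \<in> vecs n" "bil n u w = \<zero>" using u by (auto simp: U_def)
    show ?thesis unfolding \<Phi>_def using bil_lin_l[OF one_closed one_closed Pv[OF ab] uv(1) w] Pw[OF ab] uv ab by simp
  qed
  have bij: "bij_betw \<Phi> (F \<times> (F \<times> U)) (vecs n)"
  proof (rule bij_betw_byWitness[where f'=\<Psi>])
    show "\<forall>x\<in>F \<times> (F \<times> U). \<Psi> (\<Phi> x) = x"
    proof
      fix x assume "x \<in> F \<times> (F \<times> U)"
      then obtain a b u where x: "x = (a, b, u)" and ab: "a \<in> F" "b \<in> F" and u: "u \<in> U" by auto
      have uv: "u \<in> vecs n" using u by (simp add: U_def)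
      have "lin n \<one> (\<Phi> (a, b, u)) (\<ominus> \<one>) (P a b) = u"
      proof (rule vec_eqI)
        show "lin n \<one> (\<Phi> (a, b, u)) (\<ominus> \<one>) (P a b) \<in> vecs n" using Phi_v[OF ab u] Pv[OF ab] by (simp add: lin_vecs)
        show "u \<in> vecs n" by (rule uv)
        fix j assume j: "j < n"
        have c: "P a b j \<in> F" "u j \<in> F" using Pv[OF ab] uv j vecs_in by auto
        have "lin n \<one> (\<Phi> (a, b, u)) (\<ominus> \<one>) (P a b) j = \<one> \<otimes> (\<one> \<otimes> P a b j \<oplus> \<one> \<otimes> u j) \<oplus> \<ominus> \<one> \<otimes> P a b j"
          using j by (simp add: lin_app \<Phi>_def)
        also have "\<dots> = u j" using c by algebra
        finally show "lin n \<one> (\<Phi> (a, b, u)) (\<ominus> \<one>) (P a b) j = u j" .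
      qed
      thus "\<Psi> (\<Phi> x) = x" unfolding x \<Psi>_def using Phiz[OF ab u] Phiw[OF ab u] by simp
    qed
    show "\<forall>v\<in>vecs n. \<Phi> (\<Psi> v) = v"
    proof
      fix v assume v: "v \<in> vecs n"
      define a where "a = bil n v w"
      define b where "b = bil n v z"
      have ab: "a \<in> F" "b \<in> F" using bil_closed v w z by (auto simp: a_def b_def)
      show "\<Phi> (\<Psi> v) = v"
      proof (rule vec_eqI)
        show "\<Phi> (\<Psi> v) \<in> vecs n" unfolding \<Phi>_def \<Psi>_def using v ab Pv by (simp add: lin_vecs a_def[symmetric] b_def[symmetric])
        show "v \<in> vecs n" by (rule v)
        fix j assume j: "j < n"
        have c: "P a b j \<in> F" "v j \<in> F" using Pv[OF ab] v j vecs_in by auto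
        have "\<Phi> (\<Psi> v) j = \<one> \<otimes> P a b j \<oplus> \<one> \<otimes> (\<one> \<otimes> v j \<oplus> \<ominus> \<one> \<otimes> P a b j)"
          using j by (simp add: lin_app \<Phi>_def \<Psi>_def a_def[symmetric] b_def[symmetric])
        also have "\<dots> = v j" using c by algebra
        finally show "\<Phi> (\<Psi> v) j = v j" .
      qed
    qed
    show "\<Phi> ` (F \<times> (F \<times> U)) \<subseteq> vecs n" using Phi_v by auto
    show "\<Psi> ` vecs n \<subseteq> F \<times> (F \<times> U)"
    proof
      fix x assume "x \<in> \<Psi> ` vecs n"
      then obtain v where v: "v \<in> vecs n" and x: "x = \<Psi> v" by auto
      define a where "a = bil n v w"
      define b where "b = bil n v z"
      have ab: "a \<in> F" "b \<in> F" using bil_closed v w z by (auto simp: a_def b_def)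
      define u where "u = lin n \<one> v (\<ominus> \<one>) (P a b)"
      have uv: "u \<in> vecs n" using v Pv[OF ab] by (simp add: u_def lin_vecs)
      have "bil n u z = \<one> \<otimes> b \<oplus> \<ominus> \<one> \<otimes> b" unfolding u_def
        using bil_lin_l[OF one_closed _ v Pv[OF ab] z] Pz[OF ab] by (simp add: b_def)
      hence uz: "bil n u z = \<zero>" using ab by (simp add: l_minus r_neg)
      have "bil n u w = \<one> \<otimes> a \<oplus> \<ominus> \<one> \<otimes> a" unfolding u_def
        using bil_lin_l[OF one_closed _ v Pv[OF ab] w] Pw[OF ab] by (simp add: a_def)
      hence uw: "bil n u w = \<zero>" using ab by (simp add: l_minus r_neg)
      show "x \<in> F \<times> (F \<times> U)" unfolding x \<Psi>_def using ab uv uz uw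
        by (simp add: U_def u_def a_def[symmetric] b_def[symmetric])
    qed
  qed
  have S: "sum h (vecs n) = (\<Sum>a\<in>F. \<Sum>b\<in>F. \<Sum>u\<in>U. h (\<Phi> (a, b, u)))" for h :: "_ \<Rightarrow> real"
  proof -
    have "sum h (vecs n) = sum (\<lambda>x. h (\<Phi> x)) (F \<times> (F \<times> U))"
      using sum.reindex_bij_betw[OF bij, of h] by simp
    also have "\<dots> = (\<Sum>a\<in>F. \<Sum>b\<in>F. \<Sum>u\<in>U. h (\<Phi> (a, b, u)))"
      by (simp add: sum.cartesian_product split_def)
    finally show ?thesis .
  qed
  define M where "M = (\<Sum>u\<in>U. if bil n u u = \<zero> then 1 else (0::real))"
  define cU where "cU = (\<Sum>u\<in>U. (1::real))"
  have uQ: "bil n u u \<in> F" if "u \<in> U" for u using that bil_closed by (auto simp: U_def)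
  have "T n z = (\<Sum>v\<in>vecs n. if bil n v v = \<zero> \<and> bil n v z = \<zero> then 1 else 0)"
    unfolding T_def by (rule card_sum[OF vecs_fin])
  also have "\<dots> = (\<Sum>a\<in>F. \<Sum>b\<in>F. \<Sum>u\<in>U.
      if bil n (\<Phi> (a, b, u)) (\<Phi> (a, b, u)) = \<zero> \<and> bil n (\<Phi> (a, b, u)) z = \<zero> then 1 else 0)"
    by (rule S)
  also have "\<dots> = (\<Sum>a\<in>F. \<Sum>b\<in>F. if b = \<zero> then M else 0)"
  proof (intro sum.cong refl)
    fix a b assume ab: "a \<in> F" "b \<in> F"
    show "(\<Sum>u\<in>U. if bil n (\<Phi> (a, b, u)) (\<Phi> (a, b, u)) = \<zero> \<and> bil n (\<Phi> (a, b, u)) z = \<zero> then 1 else 0)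
        = (if b = \<zero> then M else 0)"
    proof (cases "b = \<zero>")
      case True
      have "(\<Sum>u\<in>U. if bil n (\<Phi> (a, b, u)) (\<Phi> (a, b, u)) = \<zero> \<and> bil n (\<Phi> (a, b, u)) z = \<zero> then 1 else 0) = M"
        unfolding M_def using True PhiQ[OF ab] Phiz[OF ab] ab uQ
        by (intro sum.cong refl) auto
      thus ?thesis using True by simp
    next
      case False
      thus ?thesis using Phiz[OF ab] by simp
    qed
  qed
  also have "\<dots> = real q * M" using fin by (simp add: sum.delta')
  finally have T1: "T n z = real q * M" .
  have "cnt n \<zero> = (\<Sum>v\<in>vecs n. if bil n v v = \<zero> then 1 else 0)"
    unfolding cnt_def by (rule card_sum[OF vecs_fin])
  also have "\<dots> = (\<Sum>a\<in>F. \<Sum>b\<in>F. \<Sum>u\<in>U. if bil n (\<Phi> (a, b, u)) (\<Phi> (a, b, u)) = \<zero> then 1 else 0)"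
    by (rule S)
  also have "\<dots> = (\<Sum>a\<in>F. \<Sum>b\<in>F. \<Sum>u\<in>U. if two \<otimes> a \<otimes> b = \<ominus> bil n u u then 1 else 0)"
  proof (intro sum.cong refl)
    fix a b u assume ab: "a \<in> F" "b \<in> F" and u: "u \<in> U"
    have "a \<otimes> b \<oplus> b \<otimes> a = two \<otimes> a \<otimes> b" using ab by algebra
    thus "(if bil n (\<Phi> (a, b, u)) (\<Phi> (a, b, u)) = \<zero> then 1 else 0) = (if two \<otimes> a \<otimes> b = \<ominus> bil n u u then (1::real) else 0)"
      using PhiQ[OF ab u] sum_zero_iff[of "two \<otimes> a \<otimes> b" "bil n u u"] ab uQ[OF u] by simp
  qed
  also have "\<dots> = (\<Sum>a\<in>F. \<Sum>u\<in>U. \<Sum>b\<in>F. if two \<otimes> a \<otimes> b = \<ominus> bil n u u then 1 else 0)"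
    by (rule sum.cong[OF refl]) (rule sum.swap)
  also have "\<dots> = (\<Sum>u\<in>U. \<Sum>a\<in>F. \<Sum>b\<in>F. if two \<otimes> a \<otimes> b = \<ominus> bil n u u then 1 else 0)"
    by (rule sum.swap)
  also have "\<dots> = (\<Sum>u\<in>U. (real q - 1) + real q * (if bil n u u = \<zero> then 1 else 0))"
  proof (intro sum.cong refl)
    fix u assume u: "u \<in> U"
    have "(\<ominus> bil n u u = \<zero>) = (bil n u u = \<zero>)" using add.inv_eq_1_iff uQ[OF u] by simp
    thus "(\<Sum>a\<in>F. \<Sum>b\<in>F. if two \<otimes> a \<otimes> b = \<ominus> bil n u u then 1 else 0) = (real q - 1) + real q * (if bil n u u = \<zero> then 1 else 0)"
      using hc[of "\<ominus> bil n u u"] uQ[OF u] by simp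
  qed
  also have "\<dots> = (real q - 1) * cU + real q * M"
    unfolding cU_def M_def by (simp add: sum.distrib sum_distrib_left)
  finally have C1: "cnt n \<zero> = (real q - 1) * cU + real q * M" .
  have "real q ^ n = (\<Sum>v\<in>vecs n. (1::real))" by (simp add: vecs_card)
  also have "\<dots> = (\<Sum>a\<in>F. \<Sum>b\<in>F. \<Sum>u\<in>U. (1::real))" by (rule S)
  also have "\<dots> = real q * real q * cU" by (simp add: cU_def)
  finally have C2: "real q ^ n = real q * real q * cU" .
  have "cU = real q ^ n / (real q * real q)" using C2 q_gt1 by simp
  thus ?thesis using T1 C1 by simp
qed

end


context fq begin

lemma cs_count: assumes A: "finite A" and f: "\<And>a. a \<in> A \<Longrightarrow> f a \<in> F"
  shows "real (card A) ^ 2 \<le> real q * (\<Sum>a\<in>A. \<Sum>b\<in>A. if f a = f b then 1 else 0)"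
proof -
  define nc where "nc c = (\<Sum>a\<in>A. if f a = c then 1 else (0::real))" for c
  have "(\<Sum>a\<in>A. \<Sum>b\<in>A. if f a = f b then 1 else 0) =
        (\<Sum>a\<in>A. \<Sum>b\<in>A. \<Sum>c\<in>F. (if f a = c then 1 else 0) * (if f b = c then 1 else (0::real)))"
  proof (intro sum.cong refl)
    fix a b assume ab: "a \<in> A" "b \<in> A"
    have "(\<Sum>c\<in>F. (if f a = c then 1 else 0) * (if f b = c then 1 else (0::real))) =
          (\<Sum>c\<in>F. if f a = c then (if f b = c then 1 else 0) else (0::real))"
      by (intro sum.cong refl) auto
    also have "\<dots> = (if f b = f a then 1 else 0)" using fin f[OF ab(1)] by (simp add: sum.delta)
    finally show "(if f a = f b then 1 else 0) = (\<Sum>c\<in>F. (if f a = c then 1 else 0) * (if f b = c then 1 else (0::real)))"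
      by auto
  qed
  also have "\<dots> = (\<Sum>a\<in>A. \<Sum>c\<in>F. \<Sum>b\<in>A. (if f a = c then 1 else 0) * (if f b = c then 1 else (0::real)))"
    by (rule sum.cong[OF refl]) (rule sum.swap)
  also have "\<dots> = (\<Sum>c\<in>F. \<Sum>a\<in>A. \<Sum>b\<in>A. (if f a = c then 1 else 0) * (if f b = c then 1 else (0::real)))"
    by (rule sum.swap)
  also have "\<dots> = (\<Sum>c\<in>F. nc c * nc c)"
    unfolding nc_def sum_product by (rule refl)
  finally have e1: "(\<Sum>a\<in>A. \<Sum>b\<in>A. if f a = f b then 1 else 0) = (\<Sum>c\<in>F. nc c * nc c)" .
  have "(\<Sum>c\<in>F. nc c) = (\<Sum>a\<in>A. \<Sum>c\<in>F. if f a = c then 1 else (0::real))"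
    unfolding nc_def by (rule sum.swap)
  also have "\<dots> = (\<Sum>a\<in>A. 1)" using fin f by (intro sum.cong refl) (simp add: sum.delta)
  finally have e2: "(\<Sum>c\<in>F. nc c) = real (card A)" by simp
  define m where "m = real (card A) / real q"
  have "0 \<le> (\<Sum>c\<in>F. (nc c - m)^2)" by (simp add: sum_nonneg)
  also have "\<dots> = (\<Sum>c\<in>F. nc c * nc c) - 2 * m * (\<Sum>c\<in>F. nc c) + real q * m^2"
    by (simp add: power2_diff sum.distrib sum_subtractf sum_distrib_left power2_eq_square algebra_simps)
  also have "\<dots> = (\<Sum>c\<in>F. nc c * nc c) - real (card A) ^ 2 / real q"
    unfolding e2 m_def using q_gt1 by (simp add: power2_eq_square field_simps)
  finally have "real (card A) ^ 2 / real q \<le> (\<Sum>c\<in>F. nc c * nc c)" by simp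
  hence "real (card A) ^ 2 \<le> real q * (\<Sum>c\<in>F. nc c * nc c)" using q_gt1 by (simp add: field_simps)
  thus ?thesis using e1 by simp
qed


lemma main: assumes A: "A \<subseteq> vecs (4*k+2)"
  shows "real (null_pairs R (4*k+2) A) \<le> real (card A) ^ 2 / real q + real q ^ (2*k) * real (card A)"
proof -
  define d where "d = Suc (Suc (2*(2*k)))"
  have d4: "4*k+2 = d" by (simp add: d_def)
  have Ad: "A \<subseteq> vecs d" using A d4 by simp
  have fA: "finite A" using Ad vecs_fin finite_subset by blast
  have aV: "a \<in> vecs d" if "a \<in> A" for a using Ad that by auto
  define diff where "diff a b = lin d \<one> a (\<ominus> \<one>) b" for a b
  have dV: "diff a b \<in> vecs d" if "a \<in> A" "b \<in> A" for a b using aV[OF that(1)] aV[OF that(2)] by (simp add: diff_def lin_vecs)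
  have D1: "sqnorm R d (\<lambda>i. a i \<ominus> b i) = bil d (diff a b) (diff a b)" if ab: "a \<in> A" "b \<in> A" for a b
    unfolding sqnorm_def bil_def diff_def using aV[OF ab(1)] aV[OF ab(2)]
    by (intro finsum_cong') (auto simp: lin_app vecs_in minus_eq l_minus Pi_def)
  define N where "N = (\<Sum>a\<in>A. \<Sum>b\<in>A. if bil d (diff a b) (diff a b) = \<zero> then 1 else (0::real))"
  have NP: "real (null_pairs R (4*k+2) A) = N"
  proof -
    have "{(a, b). a \<in> A \<and> b \<in> A \<and> sqnorm R d (\<lambda>i. a i \<ominus> b i) = \<zero>} =
          {p \<in> A \<times> A. bil d (diff (fst p) (snd p)) (diff (fst p) (snd p)) = \<zero>}"
      using D1 by auto
    hence "real (null_pairs R (4*k+2) A) = (\<Sum>p\<in>A \<times> A. if bil d (diff (fst p) (snd p)) (diff (fst p) (snd p)) = \<zero> then 1 else 0)"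
      unfolding null_pairs_def d4 using fA by (simp add: card_sum)
    also have "\<dots> = N" unfolding N_def by (simp add: sum.cartesian_product split_def)
    finally show ?thesis .
  qed
  define s where "s = cnt d \<zero>"
  define P where "P = real q ^ (2*k)"
  have Ppos: "P > 0" using q_gt1 by (simp add: P_def)
  have sval: "s = real q * P * P - (real q - 1) * P"
  proof -
    have "real q * s = real q ^ (2*(2*k+1)) + (-1) ^ (2*k+1) * (real q - 1) * real q ^ (2*k+1)"
      using cnt_even[OF zero_closed, of "2*k+1"] by (simp add: s_def d_def)
    also have "\<dots> = real q ^ (2*(2*k+1)) - (real q - 1) * real q ^ (2*k+1)"
      by (simp add: algebra_simps)
    also have "\<dots> = real q * (real q * P * P - (real q - 1) * P)"
    proof -
      have h1: "real q ^ (2*(2*k+1)) = real q * real q * P * P"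
        unfolding P_def by (simp add: power_add[symmetric] mult.commute)
      have h2: "real q ^ (2*k+1) = real q * P" unfolding P_def by simp
      show ?thesis unfolding h1 h2 by (simp add: algebra_simps)
    qed
    finally show ?thesis using q_gt1 by simp
  qed
  have bd: "bil d m (diff a b) = \<zero> \<longleftrightarrow> bil d m a = bil d m b" if m: "m \<in> vecs d" and ab: "a \<in> A" "b \<in> A" for m a b
  proof -
    have "bil d m (diff a b) = \<one> \<otimes> bil d m a \<oplus> \<ominus> \<one> \<otimes> bil d m b"
      unfolding diff_def using bil_lin_r[OF one_closed _ aV[OF ab(1)] aV[OF ab(2)] m] by simp
    also have "\<dots> = bil d m a \<ominus> bil d m b" using bil_closed m aV ab by (simp add: minus_eq l_minus)
    finally show ?thesis using bil_closed m aV ab r_right_minus_eq by simp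
  qed
  have LB: "real (card A) ^ 2 \<le> real q * (\<Sum>a\<in>A. \<Sum>b\<in>A. if bil d m (diff a b) = \<zero> then 1 else 0)"
    if m: "m \<in> vecs d" for m
    using cs_count[OF fA, of "bil d m"] bil_closed[OF m] aV bd[OF m] by simp
  define Ind where "Ind m = (if bil d m m = \<zero> then 1 else (0::real))" for m
  define X where "X m = (\<Sum>a\<in>A. \<Sum>b\<in>A. if bil d m (diff a b) = \<zero> then 1 else (0::real))" for m
  have sS: "s = (\<Sum>m\<in>vecs d. Ind m)" unfolding s_def cnt_def Ind_def by (rule card_sum[OF vecs_fin])
  have step1: "s * real (card A) ^ 2 \<le> real q * (\<Sum>m\<in>vecs d. Ind m * X m)"
  proof -
    have "s * real (card A) ^ 2 = (\<Sum>m\<in>vecs d. Ind m * real (card A) ^ 2)" unfolding sS by (simp add: sum_distrib_right)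
    also have "\<dots> \<le> (\<Sum>m\<in>vecs d. Ind m * (real q * X m))"
      using LB unfolding X_def by (intro sum_mono mult_left_mono) (auto simp: Ind_def)
    also have "\<dots> = real q * (\<Sum>m\<in>vecs d. Ind m * X m)" by (simp add: sum_distrib_left algebra_simps)
    finally show ?thesis .
  qed
  have step2: "(\<Sum>m\<in>vecs d. Ind m * X m) = (\<Sum>a\<in>A. \<Sum>b\<in>A. T d (diff a b))"
  proof -
    have "(\<Sum>m\<in>vecs d. Ind m * X m) = (\<Sum>m\<in>vecs d. \<Sum>a\<in>A. \<Sum>b\<in>A. Ind m * (if bil d m (diff a b) = \<zero> then 1 else 0))"
      unfolding X_def by (simp add: sum_distrib_left)
    also have "\<dots> = (\<Sum>a\<in>A. \<Sum>m\<in>vecs d. \<Sum>b\<in>A. Ind m * (if bil d m (diff a b) = \<zero> then 1 else 0))"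
      by (rule sum.swap)
    also have "\<dots> = (\<Sum>a\<in>A. \<Sum>b\<in>A. \<Sum>m\<in>vecs d. Ind m * (if bil d m (diff a b) = \<zero> then 1 else 0))"
      by (rule sum.cong[OF refl]) (rule sum.swap)
    also have "\<dots> = (\<Sum>a\<in>A. \<Sum>b\<in>A. T d (diff a b))"
    proof (intro sum.cong refl)
      fix a b
      show "(\<Sum>m\<in>vecs d. Ind m * (if bil d m (diff a b) = \<zero> then 1 else 0)) = T d (diff a b)"
        unfolding T_def card_sum[OF vecs_fin] Ind_def by (intro sum.cong refl) auto
    qed
    finally show ?thesis .
  qed
  have qd: "real q ^ d / (real q * real q) = P * P"
  proof -
    have "real q ^ d = real q * real q * (P * P)" unfolding d_def P_def by (simp add: power_add[symmetric])
    thus ?thesis using q_gt1 by simp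
  qed
  have Tval: "T d (diff a b) = P * P - (real q - 1) * P * (if bil d (diff a b) (diff a b) = \<zero> then 1 else 0)
                + (real q - 1) * P * P * (if a = b then 1 else 0)" if ab: "a \<in> A" "b \<in> A" for a b
  proof (cases "a = b")
    case True
    have z: "bil d m (diff a b) = \<zero>" if "m \<in> vecs d" for m using bd[OF that ab] True by simp
    have "T d (diff a b) = s" unfolding T_def s_def cnt_def using z by (metis (no_types, lifting))
    moreover have "bil d (diff a b) (diff a b) = \<zero>" using z dV[OF ab] by simp
    ultimately show ?thesis using True sval by (simp add: algebra_simps)
  next
    case False
    then obtain i where i: "i < d" "a i \<noteq> b i" using vec_eqI[OF aV[OF ab(1)] aV[OF ab(2)]] by blast
    show ?thesis
    proof (cases "bil d (diff a b) (diff a b) = \<zero>")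
      case True
      have di: "diff a b i \<noteq> \<zero>"
      proof -
        have abi: "a i \<in> F" "b i \<in> F" using i aV[OF ab(1)] aV[OF ab(2)] vecs_in by auto
        have "diff a b i = a i \<ominus> b i" unfolding diff_def using i abi
          by (simp add: lin_app minus_eq l_minus)
        thus ?thesis using i(2) r_right_minus_eq[OF abi] by simp
      qed
      have "T d (diff a b) = s - (real q - 1) * (P * P)"
        using T_null[OF dV[OF ab] i(1) di True] qd by (simp add: s_def)
      thus ?thesis using True False sval by (simp add: algebra_simps)
    next
      case nn: False
      have "T d (diff a b) = real q ^ (2*(2*k))"
        using T_nonnull[of "2*(2*k)" "2*k" "diff a b"] dV[OF ab] nn unfolding d_def by simp
      also have "\<dots> = P * P" unfolding P_def by (simp add: power_add[symmetric])
      finally show ?thesis using nn False by simp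
    qed
  qed
  have step3: "(\<Sum>a\<in>A. \<Sum>b\<in>A. T d (diff a b)) = P * P * real (card A) ^ 2 - (real q - 1) * P * N + (real q - 1) * P * P * real (card A)"
  proof -
    have "(\<Sum>a\<in>A. \<Sum>b\<in>A. T d (diff a b)) = (\<Sum>a\<in>A. \<Sum>b\<in>A. P * P - (real q - 1) * P * (if bil d (diff a b) (diff a b) = \<zero> then 1 else 0)
                + (real q - 1) * P * P * (if a = b then 1 else 0))"
      using Tval by (intro sum.cong refl) auto
    also have "\<dots> = P * P * (real (card A) * real (card A)) - (real q - 1) * P * N + (real q - 1) * P * P * (\<Sum>a\<in>A. \<Sum>b\<in>A. if a = b then 1 else 0)"
      unfolding N_def by (simp add: sum.distrib sum_subtractf sum_distrib_left)
    also have "(\<Sum>a\<in>A. \<Sum>b\<in>A. if a = b then 1 else (0::real)) = real (card A)"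
      using fA by (simp add: sum.delta)
    finally show ?thesis by (simp add: power2_eq_square)
  qed
  have ineq: "s * real (card A) ^ 2 \<le> real q * (P * P * real (card A) ^ 2 - (real q - 1) * P * N + (real q - 1) * P * P * real (card A))"
    using step1 step2 step3 by simp
  hence "real q * (real q - 1) * P * N \<le> (real q - 1) * P * real (card A) ^ 2 + real q * (real q - 1) * P * P * real (card A)"
    unfolding sval by (simp add: algebra_simps)
  hence "(real q - 1) * P * (real q * N) \<le> (real q - 1) * P * (real (card A) ^ 2 + real q * P * real (card A))"
    by (simp add: algebra_simps)
  moreover have "(real q - 1) * P > 0" using q_gt1 Ppos by simp
  ultimately have "real q * N \<le> real (card A) ^ 2 + real q * P * real (card A)"
    by (simp add: mult_le_cancel_left_pos)
  hence "N \<le> real (card A) ^ 2 / real q + P * real (card A)" using q_gt1 by (simp add: field_simps)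
  thus ?thesis unfolding NP P_def .
qed

end

theorem lemma2p2:
  fixes k :: nat
  assumes "k > 0"
  shows "\<exists>C::real. \<forall>(R::nat ring) (A::(nat \<Rightarrow> nat) set).
           field R \<and> finite (carrier R)
           \<and> (\<exists>p n. prime (p::nat) \<and> odd p \<and> card (carrier R) = p ^ n)
           \<and> card (carrier R) mod 4 = 3
           \<and> A \<subseteq> ({..<4*k+2} \<rightarrow>\<^sub>E carrier R)
           \<longrightarrow> real (null_pairs R (4*k+2) A)
                 \<le> C * (real (card A) ^ 2 / real (card (carrier R))
                        + real (card (carrier R)) ^ ((4*k+2-2) div 2) * real (card A))"
proof (intro exI[of _ "1::real"] allI impI)
  fix R :: "nat ring" and A :: "(nat \<Rightarrow> nat) set"
  assume H: "field R \<and> finite (carrier R)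
           \<and> (\<exists>p n. prime (p::nat) \<and> odd p \<and> card (carrier R) = p ^ n)
           \<and> card (carrier R) mod 4 = 3
           \<and> A \<subseteq> ({..<4*k+2} \<rightarrow>\<^sub>E carrier R)"
  have "fq R" unfolding fq_def fq_axioms_def using H by auto
  then interpret fq R .
  have "A \<subseteq> vecs (4*k+2)" using H by (simp add: vecs_def)
  hence "real (null_pairs R (4*k+2) A) \<le> real (card A) ^ 2 / real q + real q ^ (2*k) * real (card A)"
    by (rule main)
  moreover have "(4*k+2-2) div 2 = 2*k" by simp
  ultimately show "real (null_pairs R (4*k+2) A)
                 \<le> 1 * (real (card A) ^ 2 / real (card (carrier R))
                        + real (card (carrier R)) ^ ((4*k+2-2) div 2) * real (card A))" by simp
qed

end
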